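(* Let $\alpha$ be a set with involution $\tau$. A multiplicity-one-free word of length $\le 4$ in the alphabet $\alpha$ has one of the forms $aa$, $aaa$, $aaaa$, $aabb$, $abba$, $bbaa$, $abab$ with distinct $a,b\in\alpha$. The words $aa,aabb,abba,bbaa$ are contractible. The words $aaa$ and $aaaa$ are contractible if and only if $\tau(a)=a$. The word $abab$ is contractible if and only if $\tau(a)=b$. Non-contractible words of the forms $aaa$, $aaaa$, $abab$ are homotopic if and only if they are equal letterwise.
   Context: Fix a set $\alpha$ with an involution $\tau:\alpha\to\alpha$. An $\alpha$-alphabet is a set $\mathcal A$ with a map $\mathcal A\to\alpha$, $A\mapsto|A|$. An étale word over $\alpha$ is a pair $(\mathcal A,w)$ with $\mathcal A$ an $\alpha$-alphabet and $w$ a finite word in letters of $\mathcal A$; two étale words $(\mathcal A_1,w_1),(\mathcal A_2,w_2)$ are isomorphic if there is a bijection $f:\mathcal A_1\to\mathcal A_2$ with $|f(A)|=|A|$ and $w_2$ is $w_1$ with $f$ applied letterwise. A nanoword is an étale word with $\mathcal A$ finite and every letter of $\mathcal A$ occurring exactly twice in $w$. Homotopy moves on nanowords ($x,y,z,t$ words in the remaining letters; smaller alphabets carry the restricted projection): (1) $(\mathcal A,xAAy)\mapsto(\mathcal A\setminus\{A\},xy)$; (2) $(\mathcal A,xAByBAz)\mapsto(\mathcal A\setminus\{A,B\},xyz)$ if $|B|=\tau(|A|)$; (3) $(\mathcal A,xAByACzBCt)\mapsto(\mathcal A,xBAyCAzCBt)$ if $A,B,C$ are distinct and $|A|=|B|=|C|$.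 Homotopy of nanowords is the equivalence relation generated by isomorphisms, these moves and their inverses. Desingularization: for an étale word $(\mathcal A,w)$ with $m_w(A)$ the number of occurrences of $A$, let $\mathcal A^d=\{A_{i,j}: A\in\mathcal A, 1\le i<j\le m_w(A)\}$ with $|A_{i,j}|=|A|$, and let $w^d$ be obtained from $w$ by deleting letters of multiplicity 1 and replacing the $i$-th occurrence of each $A$ with $m=m_w(A)\ge2$ by $A_{1,i}A_{2,i}\cdots A_{i-1,i}A_{i,i+1}\cdots A_{i,m}$; then $(\mathcal A^d,w^d)$ is a nanoword. Two étale words are homotopic if their desingularizations are homotopic nanowords; an étale word is contractible if its desingularization is homotopic to the empty nanoword. A word $w$ in the alphabet $\alpha$ is regarded as the étale word $(\alpha,w)$ with identity projection. A word is multiplicity-one-free if every letter occurring in it occurs at least twice. *)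

theory Defs
  imports Main
begin

text \<open>Nanowords over the alphabet 'a, with letters drawn from an (infinite) letter type 'b.
  A nanoword is represented by a pair (w, p): the word w, whose alphabet is set w
  (every letter occurs exactly twice), and the projection p (only relevant on set w).\<close>

definition is_nanoword :: "'b list \<times> ('b \<Rightarrow> 'a) \<Rightarrow> bool" where
  "is_nanoword N \<longleftrightarrow> (\<forall>A\<in>set (fst N). count_list (fst N) A = 2)"

inductive nw_step :: "('a \<Rightarrow> 'a) \<Rightarrow> 'b list \<times> ('b \<Rightarrow> 'a) \<Rightarrow> 'b list \<times> ('b \<Rightarrow> 'a) \<Rightarrow> bool"
  for \<tau> :: "'a \<Rightarrow> 'a" where
  iso: "is_nanoword (w, p) \<Longrightarrow> inj_on f (set w) \<Longrightarrow> (\<forall>A\<in>set w. q (f A) = p A)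
        \<Longrightarrow> nw_step \<tau> (w, p) (map f w, q)"
| move1: "is_nanoword (x @ [A, A] @ y, p) \<Longrightarrow> nw_step \<tau> (x @ [A, A] @ y, p) (x @ y, p)"
| move2: "is_nanoword (x @ [A, B] @ y @ [B, A] @ z, p) \<Longrightarrow> p B = \<tau> (p A)
        \<Longrightarrow> nw_step \<tau> (x @ [A, B] @ y @ [B, A] @ z, p) (x @ y @ z, p)"
| move3: "is_nanoword (x @ [A, B] @ y @ [A, C] @ z @ [B, C] @ t, p) \<Longrightarrow> distinct [A, B, C]
        \<Longrightarrow> p A = p B \<Longrightarrow> p B = p C
        \<Longrightarrow> nw_step \<tau> (x @ [A, B] @ y @ [A, C] @ z @ [B, C] @ t, p)
                       (x @ [B, A] @ y @ [C, A] @ z @ [C, B] @ t, p)"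

definition nw_homotopic :: "('a \<Rightarrow> 'a) \<Rightarrow> 'b list \<times> ('b \<Rightarrow> 'a) \<Rightarrow> 'b list \<times> ('b \<Rightarrow> 'a) \<Rightarrow> bool" where
  "nw_homotopic \<tau> = (symclp (nw_step \<tau>))\<^sup>*\<^sup>*"

text \<open>Desingularization of a word w in the alphabet 'a (identity projection).
  The letter A_{i,j} is encoded as (A, i, j); its projection is A.\<close>
definition desing :: "'a list \<Rightarrow> ('a \<times> nat \<times> nat) list" where
  "desing w = concat (map (\<lambda>k. let A = w ! k; i = Suc (count_list (take k w) A);
                                   m = count_list w A
                               in map (\<lambda>j. (A, j, i)) [1..<i] @ map (\<lambda>j. (A, i, j)) [Suc i..<Suc m])
                      [0..<length w])"

definition word_homotopic :: "('a \<Rightarrow> 'a) \<Rightarrow> 'a list \<Rightarrow> 'a list \<Rightarrow> bool" where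
  "word_homotopic \<tau> u v \<longleftrightarrow> nw_homotopic \<tau> (desing u, fst) (desing v, fst)"

definition contractible :: "('a \<Rightarrow> 'a) \<Rightarrow> 'a list \<Rightarrow> bool" where
  "contractible \<tau> w \<longleftrightarrow> nw_homotopic \<tau> (desing w, fst) ([], fst)"

definition mult_one_free :: "'a list \<Rightarrow> bool" where
  "mult_one_free w \<longleftrightarrow> (\<forall>x\<in>set w. count_list w x \<ge> 2)"

end

theory Submission
  imports Defs "HOL-Library.Z2"
begin

definition pat :: "'b list \<Rightarrow> 'b \<Rightarrow> 'b \<Rightarrow> 'b list" where
  "pat w X Y = filter (\<lambda>c. c = X \<or> c = Y) w"

definition sg :: "'b list \<Rightarrow> 'b \<Rightarrow> 'b \<Rightarrow> int" where
  "sg w X Y = (if pat w X Y = [X,Y,X,Y] then 1 else if pat w X Y = [Y,X,Y,X] then -1 else 0)"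

definition lk :: "('a \<Rightarrow> int) \<Rightarrow> 'b list \<times> ('b \<Rightarrow> 'a) \<Rightarrow> 'b \<Rightarrow> int" where
  "lk \<phi> N X = (\<Sum>Y\<in>set (fst N). sg (fst N) X Y * \<phi> (snd N Y))"

definition II :: "('a \<Rightarrow> int) \<Rightarrow> ('a \<Rightarrow> int \<Rightarrow> 'g::ab_group_add) \<Rightarrow> 'b list \<times> ('b \<Rightarrow> 'a) \<Rightarrow> 'g" where
  "II \<phi> \<psi> N = (\<Sum>X\<in>set (fst N). \<psi> (snd N X) (lk \<phi> N X))"

definition JJ :: "('a \<Rightarrow> 'r::comm_ring_1) \<Rightarrow> ('a \<Rightarrow> 'r) \<Rightarrow> 'b list \<times> ('b \<Rightarrow> 'a) \<Rightarrow> 'r" where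
  "JJ u v N = (\<Sum>X\<in>set (fst N). \<Sum>Y\<in>set (fst N).
      if sg (fst N) X Y = 1 then u (snd N X) * v (snd N Y) else 0)"

lemma pat_Nil[simp]: "pat [] X Y = []" by (simp add: pat_def)
lemma pat_Cons[simp]: "pat (c # w) X Y = (if c = X \<or> c = Y then c # pat w X Y else pat w X Y)"
  by (simp add: pat_def)
lemma pat_append[simp]: "pat (u @ v) X Y = pat u X Y @ pat v X Y" by (simp add: pat_def)
lemma pat_empty[simp]: "X \<notin> set u \<Longrightarrow> Y \<notin> set u \<Longrightarrow> pat u X Y = []"
  by (induction u) auto
lemma pat_sym: "pat w X Y = pat w Y X" by (simp add: pat_def disj_commute)

lemma filter_rep: "A \<notin> set u \<Longrightarrow> pat u C A = replicate (count_list u C) C"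
  by (induction u) auto

lemma rep_split: "C \<noteq> A \<Longrightarrow>
  (replicate p C @ A # xs = replicate p' C @ A # ys) \<longleftrightarrow> (p = p' \<and> xs = ys)"
proof (induction p arbitrary: p')
  case 0 then show ?case by (cases p') auto
next
  case (Suc p) then show ?case by (cases p') auto
qed

lemma rep_single: "replicate r C = [C] \<longleftrightarrow> r = 1"
  by (cases r) auto

lemma rep_eq1: "C \<noteq> A \<Longrightarrow>
  (replicate p C @ A # replicate q C @ A # replicate r C = [C,A,C,A]) \<longleftrightarrow> (p=1 \<and> q=1 \<and> r=0)"
  using rep_split[of C A p "replicate q C @ A # replicate r C" 1 "[C,A]"]
        rep_split[of C A q "replicate r C" 1 "[]"] by auto

lemma rep_eq2: "C \<noteq> A \<Longrightarrow>
  (replicate p C @ A # replicate q C @ A # replicate r C = [A,C,A,C]) \<longleftrightarrow> (p=0 \<and> q=1 \<and> r=1)"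
  using rep_split[of C A p "replicate q C @ A # replicate r C" 0 "[C,A,C]"]
        rep_split[of C A q "replicate r C" 1 "[C]"] by (auto simp: rep_single)

definition f3 :: "nat \<Rightarrow> nat \<Rightarrow> nat \<Rightarrow> int" where
  "f3 p q r = (if p=1 \<and> q=1 \<and> r=0 then 1 else if p=0 \<and> q=1 \<and> r=1 then -1 else 0)"

lemma pat_two: "A \<notin> set u \<Longrightarrow> A \<notin> set v \<Longrightarrow> A \<notin> set s \<Longrightarrow>
  pat (u@[A]@v@[A]@s) C A = replicate (count_list u C) C @ A # replicate (count_list v C) C @ A # replicate (count_list s C) C"
  by (simp add: filter_rep)

lemma sg_two1: assumes "A \<notin> set u" "A \<notin> set v" "A \<notin> set s" "C \<noteq> A"
  shows "sg (u@[A]@v@[A]@s) C A = f3 (count_list u C) (count_list v C) (count_list s C)"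
  using assms unfolding sg_def f3_def pat_two[OF assms(1-3)]
  by (simp add: rep_eq1[OF assms(4)] rep_eq2[OF assms(4)])

lemma sg_two2: assumes "A \<notin> set u" "A \<notin> set v" "A \<notin> set s" "C \<noteq> A"
  shows "sg (u@[A]@v@[A]@s) A C = - f3 (count_list u C) (count_list v C) (count_list s C)"
proof -
  have "pat (u@[A]@v@[A]@s) A C = pat (u@[A]@v@[A]@s) C A" by (rule pat_sym)
  then show ?thesis
  using assms unfolding sg_def f3_def pat_two[OF assms(1-3)]
  by (simp add: rep_eq1[OF assms(4)] rep_eq2[OF assms(4)])
qed

lemma sg_self: "count_list w X = 2 \<Longrightarrow> sg w X X = 0"
proof -
  assume a: "count_list w X = 2"
  have "pat w X X = filter ((=) X) w" unfolding pat_def by (metis)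
  then have "length (pat w X X) = 2" using a by (simp add: count_list_eq_length_filter)
  then show ?thesis unfolding sg_def by auto
qed


lemma nano_count: "is_nanoword (w,p) \<Longrightarrow> X \<in> set w \<Longrightarrow> count_list w X = 2"
  by (simp add: is_nanoword_def)

lemma f3_0[simp]: "f3 p 0 r = 0" by (simp add: f3_def)

lemma inv_move1:
  assumes nw: "is_nanoword (x @ [A, A] @ y, p)"
  shows "(\<forall>x. \<psi> x 0 = 0) \<Longrightarrow> II \<phi> \<psi> (x @ [A, A] @ y, p) = II \<phi> \<psi> (x @ y, p)"
    and "JJ u v (x @ [A, A] @ y, p) = JJ u v (x @ y, p)"
proof -
  define w where "w = x @ [A, A] @ y"
  define w' where "w' = x @ y"
  have cA: "count_list w A = 2" using nano_count[OF nw, of A] by (simp add: w_def)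
  then have Ax: "A \<notin> set x" and Ay: "A \<notin> set y"
    by (auto simp: w_def count_list_0_iff[symmetric])
  have Aw': "A \<notin> set w'" using Ax Ay by (simp add: w'_def)
  have setw: "set w = insert A (set w')" by (auto simp: w_def w'_def)
  have sgXY: "sg w X Y = sg w' X Y" if "X \<noteq> A" "Y \<noteq> A" for X Y
    using that by (simp add: sg_def w_def w'_def)
  have sgXY': "sg w X Y = sg w' X Y" if "X \<in> set w'" "Y \<in> set w'" for X Y
    using that Aw' sgXY by metis
  have w2: "w = x @ [A] @ [] @ [A] @ y" by (simp add: w_def)
  have sgA1: "sg w C A = 0" for C
  proof (cases "C = A")
    case True then show ?thesis using sg_self[OF cA] by simp
  next
    case False then show ?thesis unfolding w2 using sg_two1[OF Ax _ Ay False, of "[]"] by simp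
  qed
  have sgA2: "sg w A C = 0" for C
  proof (cases "C = A")
    case True then show ?thesis using sg_self[OF cA] by simp
  next
    case False then show ?thesis unfolding w2 using sg_two2[OF Ax _ Ay False, of "[]"] by simp
  qed
  have lkX: "lk \<phi> (w,p) X = lk \<phi> (w',p) X" if "X \<in> set w'" for X
  proof -
    have "X \<noteq> A" using that Aw' by auto
    then show ?thesis unfolding lk_def using Aw' sgA1 sgXY
      by (simp add: setw) (rule sum.cong, simp, metis)
  qed
  have lkA: "lk \<phi> (w,p) A = 0" unfolding lk_def by (simp add: sgA2)
  show "(\<forall>x. \<psi> x 0 = 0) \<Longrightarrow> II \<phi> \<psi> (x @ [A, A] @ y, p) = II \<phi> \<psi> (x @ y, p)"
    unfolding w_def[symmetric] w'_def[symmetric] II_def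
    using Aw' lkA lkX by (simp add: setw)
  show "JJ u v (x @ [A, A] @ y, p) = JJ u v (x @ y, p)"
    unfolding w_def[symmetric] w'_def[symmetric] JJ_def
    using Aw' sgA1 sgA2 sgXY' by (simp add: setw) (intro sum.cong; simp)
qed


lemma f3_q: "q \<noteq> 1 \<Longrightarrow> f3 p q r = 0" by (simp add: f3_def)

lemma inv_move2:
  assumes nw: "is_nanoword (x @ [A, B] @ y @ [B, A] @ z, p)" and pB: "p B = \<tau> (p A)"
  shows "(\<forall>x. \<phi> (\<tau> x) = - \<phi> x) \<Longrightarrow> (\<forall>x l. \<psi> (\<tau> x) l = - \<psi> x l) \<Longrightarrow>
      II \<phi> \<psi> (x @ [A, B] @ y @ [B, A] @ z, p) = II \<phi> \<psi> (x @ y @ z, p)"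
    and "(\<forall>x. u (\<tau> x) = - u x) \<Longrightarrow> (\<forall>x. v (\<tau> x) = - v x) \<Longrightarrow>
      JJ u v (x @ [A, B] @ y @ [B, A] @ z, p) = JJ u v (x @ y @ z, p)"
proof -
  define w where "w = x @ [A, B] @ y @ [B, A] @ z"
  define w' where "w' = x @ y @ z"
  have cA: "count_list w A = 2" using nano_count[OF nw, of A] by (simp add: w_def)
  have cB: "count_list w B = 2" using nano_count[OF nw, of B] by (simp add: w_def)
  have AB: "A \<noteq> B" using cA by (auto simp: w_def)
  have Ax: "A \<notin> set x" and Ay: "A \<notin> set y" and Az: "A \<notin> set z"
    using cA AB by (auto simp: w_def count_list_0_iff[symmetric])
  have Bx: "B \<notin> set x" and By: "B \<notin> set y" and Bz: "B \<notin> set z"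
    using cB AB by (auto simp: w_def count_list_0_iff[symmetric])
  have Aw': "A \<notin> set w'" and Bw': "B \<notin> set w'" using Ax Ay Az Bx By Bz by (auto simp: w'_def)
  have setw: "set w = insert A (insert B (set w'))" by (auto simp: w_def w'_def)
  have sgXY': "sg w X Y = sg w' X Y" if "X \<in> set w'" "Y \<in> set w'" for X Y
  proof -
    have "X \<noteq> A" "X \<noteq> B" "Y \<noteq> A" "Y \<noteq> B" using that Aw' Bw' by auto
    then show ?thesis by (simp add: sg_def w_def w'_def)
  qed
  have wA: "w = x @ [A] @ (B # y @ [B]) @ [A] @ z" by (simp add: w_def)
  have wB: "w = (x @ [A]) @ [B] @ y @ [B] @ (A # z)" by (simp add: w_def)
  have BA': "A \<notin> set (B # y @ [B])" using AB Ay by auto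
  have AB': "B \<notin> set (x @ [A])" "B \<notin> set (A # z)" using AB Bx Bz by auto
  have sgC1: "sg w C A = sg w C B" if "C \<in> set w'" for C
  proof -
    have "C \<noteq> A" "C \<noteq> B" using that Aw' Bw' by auto
    then show ?thesis
      using sg_two1[OF Ax BA' Az, of C] sg_two1[OF AB' (1) By AB'(2), of C] wA wB by simp
  qed
  have sgC2: "sg w A C = sg w B C" if "C \<in> set w'" for C
  proof -
    have "C \<noteq> A" "C \<noteq> B" using that Aw' Bw' by auto
    then show ?thesis
      using sg_two2[OF Ax BA' Az, of C] sg_two2[OF AB' (1) By AB'(2), of C] wA wB by simp
  qed
  have sgAB: "sg w A B = 0" "sg w B A = 0"
    using sg_two1[OF Ax BA' Az, of B] sg_two2[OF Ax BA' Az, of B] AB Bx wA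
    by (simp_all add: f3_q)
  have sgAA: "sg w A A = 0" "sg w B B = 0" using sg_self[OF cA] sg_self[OF cB] by auto
  show "(\<forall>x. \<phi> (\<tau> x) = - \<phi> x) \<Longrightarrow> (\<forall>x l. \<psi> (\<tau> x) l = - \<psi> x l) \<Longrightarrow>
      II \<phi> \<psi> (x @ [A, B] @ y @ [B, A] @ z, p) = II \<phi> \<psi> (x @ y @ z, p)"
  proof -
    assume ph: "\<forall>x. \<phi> (\<tau> x) = - \<phi> x" and ps: "\<forall>x l. \<psi> (\<tau> x) l = - \<psi> x l"
    have lkX: "lk \<phi> (w,p) X = lk \<phi> (w',p) X" if "X \<in> set w'" for X
    proof -
      have "lk \<phi> (w,p) X = sg w X A * \<phi> (p A) + sg w X B * \<phi> (p B) + (\<Sum>Y\<in>set w'. sg w X Y * \<phi> (p Y))"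
        unfolding lk_def using Aw' Bw' AB by (simp add: setw)
      also have "\<dots> = (\<Sum>Y\<in>set w'. sg w' X Y * \<phi> (p Y))"
        using sgC1[OF that] ph pB sgXY'[OF that] by simp
      finally show ?thesis unfolding lk_def by simp
    qed
    have lkAB: "lk \<phi> (w,p) B = lk \<phi> (w,p) A"
      unfolding lk_def using Aw' Bw' AB sgAB sgAA sgC2 by (simp add: setw)
    have "II \<phi> \<psi> (w,p) = \<psi> (p A) (lk \<phi> (w,p) A) + \<psi> (p B) (lk \<phi> (w,p) B)
           + (\<Sum>X\<in>set w'. \<psi> (p X) (lk \<phi> (w,p) X))"
      unfolding II_def using Aw' Bw' AB by (simp add: setw add.assoc)
    also have "\<dots> = II \<phi> \<psi> (w',p)"
      unfolding II_def using lkAB pB ps lkX by simp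
    finally show ?thesis unfolding w_def w'_def .
  qed
  show "(\<forall>x. u (\<tau> x) = - u x) \<Longrightarrow> (\<forall>x. v (\<tau> x) = - v x) \<Longrightarrow>
      JJ u v (x @ [A, B] @ y @ [B, A] @ z, p) = JJ u v (x @ y @ z, p)"
  proof -
    assume hu: "\<forall>x. u (\<tau> x) = - u x" and hv: "\<forall>x. v (\<tau> x) = - v x"
    define F where "F = (\<lambda>X Y. if sg w X Y = 1 then u (p X) * v (p Y) else 0)"
    define F' where "F' = (\<lambda>X Y. if sg w' X Y = 1 then u (p X) * v (p Y) else 0)"
    have FA: "F A Y + F B Y = 0" if "Y \<in> set w'" for Y
      using sgC2[OF that] hu pB by (simp add: F_def algebra_simps)
    have FB: "F X A + F X B = 0" if "X \<in> set w'" for X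
      using sgC1[OF that] hv pB by (simp add: F_def algebra_simps)
    have FF: "F X Y = F' X Y" if "X \<in> set w'" "Y \<in> set w'" for X Y
      using sgXY'[OF that] by (simp add: F_def F'_def)
    have "JJ u v (w,p) = (\<Sum>X\<in>set w. \<Sum>Y\<in>set w. F X Y)" unfolding JJ_def F_def by (simp only: fst_conv snd_conv)
    also have "\<dots> = (F A A + F A B + F B A + F B B) + (\<Sum>Y\<in>set w'. F A Y + F B Y)
        + (\<Sum>X\<in>set w'. F X A + F X B) + (\<Sum>X\<in>set w'. \<Sum>Y\<in>set w'. F X Y)"
      using Aw' Bw' AB by (simp add: setw sum.distrib algebra_simps)
    also have "\<dots> = (\<Sum>X\<in>set w'. \<Sum>Y\<in>set w'. F' X Y)"
      using FA FB FF sgAB sgAA by (simp add: F_def)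
    also have "\<dots> = JJ u v (w',p)" unfolding JJ_def F'_def by (simp only: fst_conv snd_conv)
    finally show ?thesis unfolding w_def w'_def .
  qed
qed


lemma inv_move3:
  assumes nw: "is_nanoword (x @ [A, B] @ y @ [A, C] @ z @ [B, C] @ t, p)"
    and dis: "distinct [A, B, C]" and pAB: "p A = p B" and pBC: "p B = p C"
  shows "II \<phi> \<psi> (x @ [A, B] @ y @ [A, C] @ z @ [B, C] @ t, p) = II \<phi> \<psi> (x @ [B, A] @ y @ [C, A] @ z @ [C, B] @ t, p)"
    and "(\<forall>x. u x * v x = 0) \<Longrightarrow>
      JJ u v (x @ [A, B] @ y @ [A, C] @ z @ [B, C] @ t, p) = JJ u v (x @ [B, A] @ y @ [C, A] @ z @ [C, B] @ t, p)"
proof -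
  define w where "w = x @ [A, B] @ y @ [A, C] @ z @ [B, C] @ t"
  define w' where "w' = x @ [B, A] @ y @ [C, A] @ z @ [C, B] @ t"
  define S where "S = set (x @ y @ z @ t)"
  have d: "A \<noteq> B" "A \<noteq> C" "B \<noteq> C" using dis by auto
  have cA: "count_list w A = 2" using nano_count[OF nw, of A] by (simp add: w_def)
  have cB: "count_list w B = 2" using nano_count[OF nw, of B] by (simp add: w_def)
  have cC: "count_list w C = 2" using nano_count[OF nw, of C] by (simp add: w_def)
  have Ax: "A \<notin> set x" "A \<notin> set y" "A \<notin> set z" "A \<notin> set t"
    using cA d by (auto simp: w_def count_list_0_iff[symmetric])
  have Bx: "B \<notin> set x" "B \<notin> set y" "B \<notin> set z" "B \<notin> set t"
    using cB d by (auto simp: w_def count_list_0_iff[symmetric])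
  have Cx: "C \<notin> set x" "C \<notin> set y" "C \<notin> set z" "C \<notin> set t"
    using cC d by (auto simp: w_def count_list_0_iff[symmetric])
  have AS: "A \<notin> S" "B \<notin> S" "C \<notin> S" using Ax Bx Cx by (auto simp: S_def)
  have fS: "finite S" by (simp add: S_def)
  have setw: "set w = insert A (insert B (insert C S))" by (auto simp: w_def S_def)
  have setw': "set w' = insert A (insert B (insert C S))" by (auto simp: w'_def S_def)
  have wA: "w = x @ [A] @ (B # y) @ [A] @ (C # z @ [B,C] @ t)" by (simp add: w_def)
  have wA': "w' = (x@[B]) @ [A] @ (y@[C]) @ [A] @ (z @ [C,B] @ t)" by (simp add: w'_def)
  have wB: "w = (x@[A]) @ [B] @ (y@[A,C]@z) @ [B] @ (C#t)" by (simp add: w_def)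
  have wB': "w' = x @ [B] @ (A # y @ [C,A] @ z @ [C]) @ [B] @ t" by (simp add: w'_def)
  have wC: "w = (x@[A,B]@y@[A]) @ [C] @ (z@[B]) @ [C] @ t" by (simp add: w_def)
  have wC': "w' = (x@[B,A]@y) @ [C] @ (A#z) @ [C] @ (B#t)" by (simp add: w'_def)
  have nA: "A \<notin> set (B # y)" "A \<notin> set (C # z @ [B,C] @ t)" "A \<notin> set (x@[B])"
     "A \<notin> set (y@[C])" "A \<notin> set (z @ [C,B] @ t)" using Ax d by auto
  have nB: "B \<notin> set (x@[A])" "B \<notin> set (y@[A,C]@z)" "B \<notin> set (C#t)"
     "B \<notin> set (A # y @ [C,A] @ z @ [C])" using Bx d by auto
  have nC: "C \<notin> set (x@[A,B]@y@[A])" "C \<notin> set (z@[B])" "C \<notin> set (x@[B,A]@y)"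
     "C \<notin> set (A#z)" "C \<notin> set (B#t)" using Cx d by auto
  have sgD: "sg w D Y = sg w' D Y \<and> sg w Y D = sg w' Y D" if "D \<in> S" "Y \<in> {A,B,C}" for D Y
  proof -
    have D: "D \<noteq> A" "D \<noteq> B" "D \<noteq> C" using that(1) AS by auto
    show ?thesis using that(2)
    proof (elim insertE emptyE)
      assume "Y = A" then show ?thesis
        using sg_two1[OF Ax(1) nA(1,2) D(1)] sg_two1[OF nA(3,4,5) D(1)]
              sg_two2[OF Ax(1) nA(1,2) D(1)] sg_two2[OF nA(3,4,5) D(1)] D
        by (simp add: w_def w'_def)
    next
      assume "Y = B" then show ?thesis
        using sg_two1[OF nB(1,2,3) D(2)] sg_two1[OF Bx(1) nB(4) Bx(4) D(2)]
              sg_two2[OF nB(1,2,3) D(2)] sg_two2[OF Bx(1) nB(4) Bx(4) D(2)] D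
        by (simp add: w_def w'_def)
    next
      assume "Y = C" then show ?thesis
        using sg_two1[OF nC(1,2) Cx(4) D(3)] sg_two1[OF nC(3,4,5) D(3)]
              sg_two2[OF nC(1,2) Cx(4) D(3)] sg_two2[OF nC(3,4,5) D(3)] D
        by (simp add: w_def w'_def)
    qed
  qed
  have sgS: "sg w X Y = sg w' X Y" if "X \<in> S" "Y \<in> S" for X Y
  proof -
    have "X \<noteq> A" "X \<noteq> B" "X \<noteq> C" "Y \<noteq> A" "Y \<noteq> B" "Y \<noteq> C" using that AS by auto
    then show ?thesis by (simp add: sg_def w_def w'_def)
  qed
  have sgeq: "sg w X Y = sg w' X Y" if "X \<in> set w" "Y \<in> set w" "\<not> (X \<in> {A,B,C} \<and> Y \<in> {A,B,C})" for X Y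
    using that sgS sgD unfolding setw by blast
  have vals: "sg w A A = 0" "sg w A B = 1" "sg w A C = 0"
             "sg w B A = -1" "sg w B B = 0" "sg w B C = 1"
             "sg w C A = 0" "sg w C B = -1" "sg w C C = 0"
             "sg w' A A = 0" "sg w' A B = 0" "sg w' A C = 1"
             "sg w' B A = 0" "sg w' B B = 0" "sg w' B C = 0"
             "sg w' C A = -1" "sg w' C B = 0" "sg w' C C = 0"
    using Ax Bx Cx d by (simp_all add: sg_def w_def w'_def)
  show "II \<phi> \<psi> (x @ [A, B] @ y @ [A, C] @ z @ [B, C] @ t, p) = II \<phi> \<psi> (x @ [B, A] @ y @ [C, A] @ z @ [C, B] @ t, p)"
  proof -
    have lkeq: "lk \<phi> (w,p) X = lk \<phi> (w',p) X" if "X \<in> set w" for X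
    proof (cases "X \<in> S")
      case True
      then show ?thesis unfolding lk_def fst_conv snd_conv setw'[folded setw]
        using sgeq that AS by (intro sum.cong refl) auto
    next
      case False
      then have X: "X \<in> {A,B,C}" using that setw by auto
      have R: "(\<Sum>Y\<in>S. sg w X Y * \<phi> (p Y)) = (\<Sum>Y\<in>S. sg w' X Y * \<phi> (p Y))"
        using sgD X by (intro sum.cong refl) auto
      have "lk \<phi> (w,p) X = sg w X A * \<phi> (p A) + sg w X B * \<phi> (p B) + sg w X C * \<phi> (p C) + (\<Sum>Y\<in>S. sg w X Y * \<phi> (p Y))"
        unfolding lk_def using AS d fS by (simp add: setw add.assoc)
      also have "\<dots> = sg w' X A * \<phi> (p A) + sg w' X B * \<phi> (p B) + sg w' X C * \<phi> (p C) + (\<Sum>Y\<in>S. sg w' X Y * \<phi> (p Y))"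
        using X vals pAB pBC R by auto
      also have "\<dots> = lk \<phi> (w',p) X"
        unfolding lk_def using AS d fS by (simp add: setw' add.assoc)
      finally show ?thesis .
    qed
    show ?thesis unfolding w_def[symmetric] w'_def[symmetric] II_def fst_conv snd_conv setw'[folded setw]
      using lkeq by (intro sum.cong refl) auto
  qed
  show "(\<forall>x. u x * v x = 0) \<Longrightarrow>
      JJ u v (x @ [A, B] @ y @ [A, C] @ z @ [B, C] @ t, p) = JJ u v (x @ [B, A] @ y @ [C, A] @ z @ [C, B] @ t, p)"
  proof -
    assume uv: "\<forall>x. u x * v x = 0"
    have "(if sg w X Y = 1 then u (p X) * v (p Y) else 0) = (if sg w' X Y = 1 then u (p X) * v (p Y) else 0)"
      if "X \<in> set w" "Y \<in> set w" for X Y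
    proof (cases "X \<in> {A,B,C} \<and> Y \<in> {A,B,C}")
      case True
      then have "p X = p A" "p Y = p A" using pAB pBC by auto
      then show ?thesis using uv by simp
    next
      case False then show ?thesis using sgeq that by simp
    qed
    then show ?thesis unfolding w_def[symmetric] w'_def[symmetric] JJ_def fst_conv snd_conv setw'[folded setw]
      by (intro sum.cong refl) auto
  qed
qed


lemma inv_iso:
  assumes inj: "inj_on f (set w)" and q: "\<forall>A\<in>set w. q (f A) = p A"
  shows "II \<phi> \<psi> (w, p) = II \<phi> \<psi> (map f w, q)"
    and "JJ u v (w, p) = JJ u v (map f w, q)"
proof -
  have sgf: "sg (map f w) (f X) (f Y) = sg w X Y" if "X \<in> set w" "Y \<in> set w" for X Y
  proof -
    have "filter (\<lambda>c. f c = f X \<or> f c = f Y) w = filter (\<lambda>c. c = X \<or> c = Y) w"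
      using inj that by (intro filter_cong refl) (auto dest: inj_onD)
    then have pf: "pat (map f w) (f X) (f Y) = map f (pat w X Y)"
      unfolding pat_def by (simp add: filter_map comp_def)
    have sub: "set (pat w X Y) \<union> set [X,Y,X,Y] \<subseteq> set w" using that by (auto simp: pat_def)
    have e1: "map f (pat w X Y) = map f [X,Y,X,Y] \<longleftrightarrow> pat w X Y = [X,Y,X,Y]"
      by (rule inj_on_map_eq_map[OF inj_on_subset[OF inj sub]])
    have sub2: "set (pat w X Y) \<union> set [Y,X,Y,X] \<subseteq> set w" using that by (auto simp: pat_def)
    have e2: "map f (pat w X Y) = map f [Y,X,Y,X] \<longleftrightarrow> pat w X Y = [Y,X,Y,X]"
      by (rule inj_on_map_eq_map[OF inj_on_subset[OF inj sub2]])
    show ?thesis unfolding sg_def pf using e1 e2 by simp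
  qed
  have lkf: "lk \<phi> (map f w, q) (f X) = lk \<phi> (w, p) X" if "X \<in> set w" for X
  proof -
    have "lk \<phi> (map f w, q) (f X) = (\<Sum>Y\<in>f ` set w. sg (map f w) (f X) Y * \<phi> (q Y))"
      unfolding lk_def by simp
    also have "\<dots> = (\<Sum>Y\<in>set w. sg (map f w) (f X) (f Y) * \<phi> (q (f Y)))"
      by (rule sum.reindex[OF inj, unfolded comp_def])
    also have "\<dots> = lk \<phi> (w, p) X" unfolding lk_def using sgf that q by simp
    finally show ?thesis .
  qed
  show "II \<phi> \<psi> (w, p) = II \<phi> \<psi> (map f w, q)"
  proof -
    have "II \<phi> \<psi> (map f w, q) = (\<Sum>X\<in>f ` set w. \<psi> (q X) (lk \<phi> (map f w, q) X))"
      unfolding II_def by simp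
    also have "\<dots> = (\<Sum>X\<in>set w. \<psi> (q (f X)) (lk \<phi> (map f w, q) (f X)))"
      by (rule sum.reindex[OF inj, unfolded comp_def])
    also have "\<dots> = II \<phi> \<psi> (w, p)" unfolding II_def using lkf q by simp
    finally show ?thesis by simp
  qed
  show "JJ u v (w, p) = JJ u v (map f w, q)"
  proof -
    have "JJ u v (map f w, q) = (\<Sum>X\<in>f ` set w. \<Sum>Y\<in>f ` set w.
      if sg (map f w) X Y = 1 then u (q X) * v (q Y) else 0)"
      unfolding JJ_def by (simp only: fst_conv snd_conv set_map)
    also have "\<dots> = (\<Sum>X\<in>set w. \<Sum>Y\<in>f ` set w.
      if sg (map f w) (f X) Y = 1 then u (q (f X)) * v (q Y) else 0)"
      by (rule sum.reindex[OF inj, unfolded comp_def])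
    also have "\<dots> = (\<Sum>X\<in>set w. \<Sum>Y\<in>set w.
      if sg (map f w) (f X) (f Y) = 1 then u (q (f X)) * v (q (f Y)) else 0)"
      by (rule sum.cong[OF refl], rule sum.reindex[OF inj, unfolded comp_def])
    also have "\<dots> = JJ u v (w, p)" unfolding JJ_def fst_conv snd_conv
      using sgf q by (intro sum.cong refl) simp
    finally show ?thesis by simp
  qed
qed

lemma step_inv:
  assumes "nw_step \<tau> N M"
    and ph: "\<forall>x. \<phi> (\<tau> x) = - \<phi> x" and ps: "\<forall>x l. \<psi> (\<tau> x) l = - \<psi> x l" and ps0: "\<forall>x. \<psi> x 0 = 0"
  shows "II \<phi> \<psi> N = II \<phi> \<psi> M"
  using assms(1)
proof cases
  case (iso w p f q) then show ?thesis using inv_iso(1)[of f w q p \<phi> \<psi>] by simp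
next
  case (move1 x A y p) then show ?thesis using inv_move1(1)[of x A y p \<psi> \<phi>] ps0 by simp
next
  case (move2 x A B y z p) then show ?thesis using inv_move2(1)[of x A B y z p \<tau> \<phi> \<psi>] ph ps by simp
next
  case (move3 x A B y C z t p) then show ?thesis using inv_move3(1)[of x A B y C z t p \<phi> \<psi>] by simp
qed

lemma step_invJ:
  assumes "nw_step \<tau> N M"
    and hu: "\<forall>x. u (\<tau> x) = - u x" and hv: "\<forall>x. v (\<tau> x) = - v x" and uv: "\<forall>x. u x * v x = 0"
  shows "JJ u v N = JJ u v M"
  using assms(1)
proof cases
  case (iso w p f q) then show ?thesis using inv_iso(2)[of f w q p u v] by simp
next
  case (move1 x A y p) then show ?thesis using inv_move1(2)[of x A y p u v] by simp
next
  case (move2 x A B y z p) then show ?thesis using inv_move2(2)[of x A B y z p \<tau> u v] hu hv by simp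
next
  case (move3 x A B y C z t p) then show ?thesis using inv_move3(2)[of x A B y C z t p u v] uv by simp
qed

lemma hom_inv:
  assumes "nw_homotopic \<tau> N M"
    and ph: "\<forall>x. \<phi> (\<tau> x) = - \<phi> x" and ps: "\<forall>x l. \<psi> (\<tau> x) l = - \<psi> x l" and ps0: "\<forall>x. \<psi> x 0 = 0"
  shows "II \<phi> \<psi> N = II \<phi> \<psi> M"
  using assms(1) unfolding nw_homotopic_def
proof (induction rule: rtranclp_induct)
  case base then show ?case by simp
next
  case (step y z)
  from step(2) have "II \<phi> \<psi> y = II \<phi> \<psi> z"
    by (rule symclpE) (use step_inv[OF _ ph ps ps0] in metis)+
  then show ?case using step(3) by simp
qed

lemma hom_invJ:
  assumes "nw_homotopic \<tau> N M"
    and hu: "\<forall>x. u (\<tau> x) = - u x" and hv: "\<forall>x. v (\<tau> x) = - v x" and uv: "\<forall>x. u x * v x = 0"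
  shows "JJ u v N = JJ u v M"
  using assms(1) unfolding nw_homotopic_def
proof (induction rule: rtranclp_induct)
  case base then show ?case by simp
next
  case (step y z)
  from step(2) have "JJ u v y = JJ u v z"
    by (rule symclpE) (use step_invJ[OF _ hu hv uv] in metis)+
  then show ?case using step(3) by simp
qed

lemma desing_aaa: "desing [a,a,a] = [(a,1,2),(a,1,3),(a,1,2),(a,2,3),(a,1,3),(a,2,3)]"
  by (simp add: desing_def upt_rec)
lemma desing_aaaa: "desing [a,a,a,a] = [(a,1,2),(a,1,3),(a,1,4),(a,1,2),(a,2,3),(a,2,4),(a,1,3),(a,2,3),(a,3,4),(a,1,4),(a,2,4),(a,3,4)]"
  by (simp add: desing_def upt_rec)
lemma desing_abab: "a \<noteq> b \<Longrightarrow> desing [a,b,a,b] = [(a,1,2),(b,1,2),(a,1,2),(b,1,2)]"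
  by (simp add: desing_def upt_rec)
lemma set_aaa: "set (desing [a,a,a]) = {(a,1,2),(a,1,3),(a,2,3)}"
  by (auto simp: desing_aaa)
lemma set_aaaa: "set (desing [a,a,a,a]) = {(a,1,2),(a,1,3),(a,1,4),(a,2,3),(a,2,4),(a,3,4)}"
  by (auto simp: desing_aaaa)
lemma set_abab: "a \<noteq> b \<Longrightarrow> set (desing [a,b,a,b]) = {(a,1,2),(b,1,2)}"
  by (auto simp: desing_abab)

lemma II_aaa: "II \<phi> \<psi> (desing [a,a,a], fst) = \<psi> a (\<phi> a) + \<psi> a 0 + \<psi> a (- \<phi> a)"
  unfolding II_def lk_def fst_conv snd_conv set_aaa
  by (simp add: desing_aaa sg_def add.assoc)
lemma II_aaaa: "II \<phi> \<psi> (desing [a,a,a,a], fst) = \<psi> a (2 * \<phi> a) + \<psi> a (2 * \<phi> a) + \<psi> a 0 + \<psi> a 0 + \<psi> a (- 2 * \<phi> a) + \<psi> a (- 2 * \<phi> a)"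
  unfolding II_def lk_def fst_conv snd_conv set_aaaa
  by (simp add: desing_aaaa sg_def add.assoc)
lemma II_abab: assumes "a \<noteq> b" shows "II \<phi> \<psi> (desing [a,b,a,b], fst) = \<psi> a (\<phi> b) + \<psi> b (- \<phi> a)"
  unfolding II_def lk_def fst_conv snd_conv set_abab[OF assms]
  using assms by (simp add: desing_abab sg_def)
lemma JJ_aaa: "JJ u v (desing [a,a,a], fst) = 2 * (u a * v a)"
  unfolding JJ_def fst_conv snd_conv set_aaa
  by (simp add: desing_aaa sg_def)
lemma JJ_aaaa: "JJ u v (desing [a,a,a,a], fst) = 9 * (u a * v a)"
  unfolding JJ_def fst_conv snd_conv set_aaaa
  by (simp add: desing_aaaa sg_def)
lemma JJ_abab: assumes "a \<noteq> b" shows "JJ u v (desing [a,b,a,b], fst) = u a * v b"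
  unfolding JJ_def fst_conv snd_conv set_abab[OF assms]
  using assms by (simp add: desing_abab sg_def)

lemma hom_refl: "nw_homotopic \<tau> N N" unfolding nw_homotopic_def by simp
lemma hom_fwd: "nw_step \<tau> N M \<Longrightarrow> nw_homotopic \<tau> M K \<Longrightarrow> nw_homotopic \<tau> N K"
  unfolding nw_homotopic_def by (rule converse_rtranclp_into_rtranclp) auto
lemma hom_bwd: "nw_step \<tau> M N \<Longrightarrow> nw_homotopic \<tau> M K \<Longrightarrow> nw_homotopic \<tau> N K"
  unfolding nw_homotopic_def by (rule converse_rtranclp_into_rtranclp) auto

lemma m1: assumes "w = x @ [A, A] @ y" "w' = x @ y" "is_nanoword (w,p)" shows "nw_step \<tau> (w,p) (w',p)"
  using assms(3) unfolding assms(1,2) by (rule nw_step.move1)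
lemma m2: assumes "w = x @ [A, B] @ y @ [B, A] @ z" "w' = x @ y @ z" "is_nanoword (w,p)" "p B = \<tau> (p A)"
  shows "nw_step \<tau> (w,p) (w',p)"
  using assms(3,4) unfolding assms(1,2) by (rule nw_step.move2)
lemma m3: assumes "w = x @ [A,B] @ y @ [A,C] @ z @ [B,C] @ t" "w' = x @ [B,A] @ y @ [C,A] @ z @ [C,B] @ t"
  "is_nanoword (w,p)" "distinct [A,B,C]" "p A = p B" "p B = p C" shows "nw_step \<tau> (w,p) (w',p)"
  using assms(3-6) unfolding assms(1,2) by (rule nw_step.move3)

lemma contr_aaa: assumes ta: "\<tau> a = a" shows "contractible \<tau> [a,a,a]"
proof -
  have "nw_homotopic \<tau> ([(a,1::nat,2::nat),(a,1,3),(a,1,2),(a,2,3),(a,1,3),(a,2,3)], fst) ([], fst)"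
  proof -
    have s0: "nw_step \<tau> ([(a,1::nat,2::nat),(a,1,3),(a,1,2),(a,2,3),(a,1,3),(a,2,3)], fst) ([(a,1::nat,3::nat),(a,1,2),(a,2,3),(a,1,2),(a,2,3),(a,1,3)], fst)"
      by (rule m3[where x="[]" and A="(a,1,2)" and B="(a,1,3)" and y="[]" and C="(a,2,3)" and z="[]" and t="[]"]) (simp_all add: is_nanoword_def ta)
    have s1: "nw_step \<tau> ([(a,1::nat,3::nat),(a,20,0),(a,20,1),(a,1,2),(a,2,3),(a,20,1),(a,20,0),(a,1,2),(a,2,3),(a,1,3)], fst) ([(a,1::nat,3::nat),(a,1,2),(a,2,3),(a,1,2),(a,2,3),(a,1,3)], fst)"
      by (rule m2[where x="[(a,1::nat,3::nat)]" and A="(a,20,0)" and B="(a,20,1)" and y="[(a,1::nat,2::nat),(a,2,3)]" and z="[(a,1::nat,2::nat),(a,2,3),(a,1,3)]"]) (simp_all add: is_nanoword_def ta)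
    have s2: "nw_step \<tau> ([(a,1::nat,3::nat),(a,20,0),(a,21,0),(a,21,1),(a,20,1),(a,1,2),(a,2,3),(a,20,1),(a,20,0),(a,1,2),(a,2,3),(a,21,1),(a,21,0),(a,1,3)], fst) ([(a,1::nat,3::nat),(a,20,0),(a,20,1),(a,1,2),(a,2,3),(a,20,1),(a,20,0),(a,1,2),(a,2,3),(a,1,3)], fst)"
      by (rule m2[where x="[(a,1::nat,3::nat),(a,20,0)]" and A="(a,21,0)" and B="(a,21,1)" and y="[(a,20::nat,1::nat),(a,1,2),(a,2,3),(a,20,1),(a,20,0),(a,1,2),(a,2,3)]" and z="[(a,1::nat,3::nat)]"]) (simp_all add: is_nanoword_def ta)
    have s3: "nw_step \<tau> ([(a,1::nat,3::nat),(a,20,0),(a,21,0),(a,20,1),(a,21,1),(a,1,2),(a,20,1),(a,2,3),(a,20,0),(a,1,2),(a,21,1),(a,2,3),(a,21,0),(a,1,3)], fst) ([(a,1::nat,3::nat),(a,20,0),(a,21,0),(a,21,1),(a,20,1),(a,1,2),(a,2,3),(a,20,1),(a,20,0),(a,1,2),(a,2,3),(a,21,1),(a,21,0),(a,1,3)], fst)"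
      by (rule m3[where x="[(a,1::nat,3::nat),(a,20,0),(a,21,0)]" and A="(a,20,1)" and B="(a,21,1)" and y="[(a,1::nat,2::nat)]" and C="(a,2,3)" and z="[(a,20::nat,0::nat),(a,1,2)]" and t="[(a,21::nat,0::nat),(a,1,3)]"]) (simp_all add: is_nanoword_def ta)
    have s4: "nw_step \<tau> ([(a,1::nat,3::nat),(a,20,0),(a,21,0),(a,20,1),(a,21,1),(a,1,2),(a,20,1),(a,2,3),(a,20,0),(a,1,2),(a,21,1),(a,2,3),(a,21,0),(a,1,3)], fst) ([(a,1::nat,3::nat),(a,20,0),(a,21,0),(a,20,1),(a,20,1),(a,2,3),(a,20,0),(a,2,3),(a,21,0),(a,1,3)], fst)"
      by (rule m2[where x="[(a,1::nat,3::nat),(a,20,0),(a,21,0),(a,20,1)]" and A="(a,21,1)" and B="(a,1,2)" and y="[(a,20::nat,1::nat),(a,2,3),(a,20,0)]" and z="[(a,2::nat,3::nat),(a,21,0),(a,1,3)]"]) (simp_all add: is_nanoword_def ta)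
    have s5: "nw_step \<tau> ([(a,1::nat,3::nat),(a,20,0),(a,21,0),(a,20,1),(a,20,1),(a,2,3),(a,20,0),(a,2,3),(a,21,0),(a,1,3)], fst) ([(a,1::nat,3::nat),(a,20,0),(a,21,0),(a,2,3),(a,20,0),(a,2,3),(a,21,0),(a,1,3)], fst)"
      by (rule m1[where x="[(a,1::nat,3::nat),(a,20,0),(a,21,0)]" and A="(a,20,1)" and y="[(a,2::nat,3::nat),(a,20,0),(a,2,3),(a,21,0),(a,1,3)]"]) (simp_all add: is_nanoword_def ta)
    have s6: "nw_step \<tau> ([(a,1::nat,3::nat),(a,20,0),(a,21,0),(a,2,3),(a,20,0),(a,2,3),(a,21,0),(a,1,3)], fst) ([(a,1::nat,3::nat),(a,20,0),(a,20,0),(a,1,3)], fst)"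
      by (rule m2[where x="[(a,1::nat,3::nat),(a,20,0)]" and A="(a,21,0)" and B="(a,2,3)" and y="[(a,20::nat,0::nat)]" and z="[(a,1::nat,3::nat)]"]) (simp_all add: is_nanoword_def ta)
    have s7: "nw_step \<tau> ([(a,1::nat,3::nat),(a,20,0),(a,20,0),(a,1,3)], fst) ([], fst)"
      by (rule m2[where x="[]" and A="(a,1,3)" and B="(a,20,0)" and y="[]" and z="[]"]) (simp_all add: is_nanoword_def ta)
    have h8: "nw_homotopic \<tau> ([], fst) ([], fst)" by (rule hom_refl)
    have h7: "nw_homotopic \<tau> ([(a,1::nat,3::nat),(a,20,0),(a,20,0),(a,1,3)], fst) ([], fst)" by (rule hom_fwd[OF s7 h8])
    have h6: "nw_homotopic \<tau> ([(a,1::nat,3::nat),(a,20,0),(a,21,0),(a,2,3),(a,20,0),(a,2,3),(a,21,0),(a,1,3)], fst) ([], fst)" by (rule hom_fwd[OF s6 h7])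
    have h5: "nw_homotopic \<tau> ([(a,1::nat,3::nat),(a,20,0),(a,21,0),(a,20,1),(a,20,1),(a,2,3),(a,20,0),(a,2,3),(a,21,0),(a,1,3)], fst) ([], fst)" by (rule hom_fwd[OF s5 h6])
    have h4: "nw_homotopic \<tau> ([(a,1::nat,3::nat),(a,20,0),(a,21,0),(a,20,1),(a,21,1),(a,1,2),(a,20,1),(a,2,3),(a,20,0),(a,1,2),(a,21,1),(a,2,3),(a,21,0),(a,1,3)], fst) ([], fst)" by (rule hom_fwd[OF s4 h5])
    have h3: "nw_homotopic \<tau> ([(a,1::nat,3::nat),(a,20,0),(a,21,0),(a,21,1),(a,20,1),(a,1,2),(a,2,3),(a,20,1),(a,20,0),(a,1,2),(a,2,3),(a,21,1),(a,21,0),(a,1,3)], fst) ([], fst)" by (rule hom_bwd[OF s3 h4])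
    have h2: "nw_homotopic \<tau> ([(a,1::nat,3::nat),(a,20,0),(a,20,1),(a,1,2),(a,2,3),(a,20,1),(a,20,0),(a,1,2),(a,2,3),(a,1,3)], fst) ([], fst)" by (rule hom_bwd[OF s2 h3])
    have h1: "nw_homotopic \<tau> ([(a,1::nat,3::nat),(a,1,2),(a,2,3),(a,1,2),(a,2,3),(a,1,3)], fst) ([], fst)" by (rule hom_bwd[OF s1 h2])
    have h0: "nw_homotopic \<tau> ([(a,1::nat,2::nat),(a,1,3),(a,1,2),(a,2,3),(a,1,3),(a,2,3)], fst) ([], fst)" by (rule hom_fwd[OF s0 h1])
    then show ?thesis .
  qed

  then show ?thesis unfolding contractible_def desing_aaa .
qed

lemma contr_abab: assumes ta: "\<tau> a = b" and tb: "\<tau> b = a" and ab: "a \<noteq> b" shows "contractible \<tau> [a,b,a,b]"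
proof -
  have "nw_homotopic \<tau> ([(a,1::nat,2::nat),(b,1,2),(a,1,2),(b,1,2)], fst) ([], fst)"
  proof -
    have s0: "nw_step \<tau> ([(a,20::nat,0::nat),(b,20,1),(a,1,2),(b,1,2),(b,20,1),(a,20,0),(a,1,2),(b,1,2)], fst) ([(a,1::nat,2::nat),(b,1,2),(a,1,2),(b,1,2)], fst)"
      by (rule m2[where x="[]" and A="(a,20,0)" and B="(b,20,1)" and y="[(a,1::nat,2::nat),(b,1,2)]" and z="[(a,1::nat,2::nat),(b,1,2)]"]) (simp_all add: is_nanoword_def ta tb ab ab[symmetric])
    have s1: "nw_step \<tau> ([(a,20::nat,0::nat),(a,21,0),(b,21,1),(b,20,1),(a,1,2),(b,1,2),(b,20,1),(a,20,0),(a,1,2),(b,1,2),(b,21,1),(a,21,0)], fst) ([(a,20::nat,0::nat),(b,20,1),(a,1,2),(b,1,2),(b,20,1),(a,20,0),(a,1,2),(b,1,2)], fst)"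
      by (rule m2[where x="[(a,20::nat,0::nat)]" and A="(a,21,0)" and B="(b,21,1)" and y="[(b,20::nat,1::nat),(a,1,2),(b,1,2),(b,20,1),(a,20,0),(a,1,2),(b,1,2)]" and z="[]"]) (simp_all add: is_nanoword_def ta tb ab ab[symmetric])
    have s2: "nw_step \<tau> ([(a,20::nat,0::nat),(a,21,0),(b,20,1),(b,21,1),(a,1,2),(b,20,1),(b,1,2),(a,20,0),(a,1,2),(b,21,1),(b,1,2),(a,21,0)], fst) ([(a,20::nat,0::nat),(a,21,0),(b,21,1),(b,20,1),(a,1,2),(b,1,2),(b,20,1),(a,20,0),(a,1,2),(b,1,2),(b,21,1),(a,21,0)], fst)"
      by (rule m3[where x="[(a,20::nat,0::nat),(a,21,0)]" and A="(b,20,1)" and B="(b,21,1)" and y="[(a,1::nat,2::nat)]" and C="(b,1,2)" and z="[(a,20::nat,0::nat),(a,1,2)]" and t="[(a,21::nat,0::nat)]"]) (simp_all add: is_nanoword_def ta tb ab ab[symmetric])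
    have s3: "nw_step \<tau> ([(a,20::nat,0::nat),(a,21,0),(b,20,1),(b,21,1),(a,1,2),(b,20,1),(b,1,2),(a,20,0),(a,1,2),(b,21,1),(b,1,2),(a,21,0)], fst) ([(a,20::nat,0::nat),(a,21,0),(b,20,1),(b,20,1),(b,1,2),(a,20,0),(b,1,2),(a,21,0)], fst)"
      by (rule m2[where x="[(a,20::nat,0::nat),(a,21,0),(b,20,1)]" and A="(b,21,1)" and B="(a,1,2)" and y="[(b,20::nat,1::nat),(b,1,2),(a,20,0)]" and z="[(b,1::nat,2::nat),(a,21,0)]"]) (simp_all add: is_nanoword_def ta tb ab ab[symmetric])
    have s4: "nw_step \<tau> ([(a,20::nat,0::nat),(a,21,0),(b,20,1),(b,20,1),(b,1,2),(a,20,0),(b,1,2),(a,21,0)], fst) ([(a,20::nat,0::nat),(a,21,0),(b,1,2),(a,20,0),(b,1,2),(a,21,0)], fst)"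
      by (rule m1[where x="[(a,20::nat,0::nat),(a,21,0)]" and A="(b,20,1)" and y="[(b,1::nat,2::nat),(a,20,0),(b,1,2),(a,21,0)]"]) (simp_all add: is_nanoword_def ta tb ab ab[symmetric])
    have s5: "nw_step \<tau> ([(a,20::nat,0::nat),(a,21,0),(b,1,2),(a,20,0),(b,1,2),(a,21,0)], fst) ([(a,20::nat,0::nat),(a,20,0)], fst)"
      by (rule m2[where x="[(a,20::nat,0::nat)]" and A="(a,21,0)" and B="(b,1,2)" and y="[(a,20::nat,0::nat)]" and z="[]"]) (simp_all add: is_nanoword_def ta tb ab ab[symmetric])
    have s6: "nw_step \<tau> ([(a,20::nat,0::nat),(a,20,0)], fst) ([], fst)"
      by (rule m1[where x="[]" and A="(a,20,0)" and y="[]"]) (simp_all add: is_nanoword_def ta tb ab ab[symmetric])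
    have h7: "nw_homotopic \<tau> ([], fst) ([], fst)" by (rule hom_refl)
    have h6: "nw_homotopic \<tau> ([(a,20::nat,0::nat),(a,20,0)], fst) ([], fst)" by (rule hom_fwd[OF s6 h7])
    have h5: "nw_homotopic \<tau> ([(a,20::nat,0::nat),(a,21,0),(b,1,2),(a,20,0),(b,1,2),(a,21,0)], fst) ([], fst)" by (rule hom_fwd[OF s5 h6])
    have h4: "nw_homotopic \<tau> ([(a,20::nat,0::nat),(a,21,0),(b,20,1),(b,20,1),(b,1,2),(a,20,0),(b,1,2),(a,21,0)], fst) ([], fst)" by (rule hom_fwd[OF s4 h5])
    have h3: "nw_homotopic \<tau> ([(a,20::nat,0::nat),(a,21,0),(b,20,1),(b,21,1),(a,1,2),(b,20,1),(b,1,2),(a,20,0),(a,1,2),(b,21,1),(b,1,2),(a,21,0)], fst) ([], fst)" by (rule hom_fwd[OF s3 h4])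
    have h2: "nw_homotopic \<tau> ([(a,20::nat,0::nat),(a,21,0),(b,21,1),(b,20,1),(a,1,2),(b,1,2),(b,20,1),(a,20,0),(a,1,2),(b,1,2),(b,21,1),(a,21,0)], fst) ([], fst)" by (rule hom_bwd[OF s2 h3])
    have h1: "nw_homotopic \<tau> ([(a,20::nat,0::nat),(b,20,1),(a,1,2),(b,1,2),(b,20,1),(a,20,0),(a,1,2),(b,1,2)], fst) ([], fst)" by (rule hom_bwd[OF s1 h2])
    have h0: "nw_homotopic \<tau> ([(a,1::nat,2::nat),(b,1,2),(a,1,2),(b,1,2)], fst) ([], fst)" by (rule hom_bwd[OF s0 h1])
    then show ?thesis .
  qed

  then show ?thesis unfolding contractible_def desing_abab[OF ab] .
qed

lemma contr_aaaa: assumes ta: "\<tau> a = a" shows "contractible \<tau> [a,a,a,a]"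
proof -
  have "nw_homotopic \<tau> ([(a,1::nat,2::nat),(a,1,3),(a,1,4),(a,1,2),(a,2,3),(a,2,4),(a,1,3),(a,2,3),(a,3,4),(a,1,4),(a,2,4),(a,3,4)], fst) ([], fst)"
  proof -
    have s0: "nw_step \<tau> ([(a,1::nat,2::nat),(a,1,3),(a,1,4),(a,1,2),(a,2,3),(a,2,4),(a,1,3),(a,2,3),(a,3,4),(a,1,4),(a,2,4),(a,3,4)], fst) ([(a,1::nat,3::nat),(a,1,2),(a,1,4),(a,2,3),(a,1,2),(a,2,4),(a,2,3),(a,1,3),(a,3,4),(a,1,4),(a,2,4),(a,3,4)], fst)"
      by (rule m3[where x="[]" and A="(a,1,2)" and B="(a,1,3)" and y="[(a,1::nat,4::nat)]" and C="(a,2,3)" and z="[(a,2::nat,4::nat)]" and t="[(a,3::nat,4::nat),(a,1,4),(a,2,4),(a,3,4)]"]) (simp_all add: is_nanoword_def ta)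
    have s1: "nw_step \<tau> ([(a,1::nat,3::nat),(a,1,2),(a,1,4),(a,2,3),(a,1,2),(a,2,4),(a,2,3),(a,1,3),(a,3,4),(a,1,4),(a,2,4),(a,3,4)], fst) ([(a,1::nat,3::nat),(a,1,4),(a,1,2),(a,2,3),(a,2,4),(a,1,2),(a,2,3),(a,1,3),(a,3,4),(a,2,4),(a,1,4),(a,3,4)], fst)"
      by (rule m3[where x="[(a,1::nat,3::nat)]" and A="(a,1,2)" and B="(a,1,4)" and y="[(a,2::nat,3::nat)]" and C="(a,2,4)" and z="[(a,2::nat,3::nat),(a,1,3),(a,3,4)]" and t="[(a,3::nat,4::nat)]"]) (simp_all add: is_nanoword_def ta)
    have s2: "nw_step \<tau> ([(a,1::nat,3::nat),(a,1,4),(a,1,2),(a,2,3),(a,2,4),(a,20,0),(a,20,1),(a,1,2),(a,2,3),(a,20,1),(a,20,0),(a,1,3),(a,3,4),(a,2,4),(a,1,4),(a,3,4)], fst) ([(a,1::nat,3::nat),(a,1,4),(a,1,2),(a,2,3),(a,2,4),(a,1,2),(a,2,3),(a,1,3),(a,3,4),(a,2,4),(a,1,4),(a,3,4)], fst)"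
      by (rule m2[where x="[(a,1::nat,3::nat),(a,1,4),(a,1,2),(a,2,3),(a,2,4)]" and A="(a,20,0)" and B="(a,20,1)" and y="[(a,1::nat,2::nat),(a,2,3)]" and z="[(a,1::nat,3::nat),(a,3,4),(a,2,4),(a,1,4),(a,3,4)]"]) (simp_all add: is_nanoword_def ta)
    have s3: "nw_step \<tau> ([(a,1::nat,3::nat),(a,1,4),(a,21,0),(a,21,1),(a,1,2),(a,2,3),(a,2,4),(a,20,0),(a,20,1),(a,1,2),(a,2,3),(a,20,1),(a,21,1),(a,21,0),(a,20,0),(a,1,3),(a,3,4),(a,2,4),(a,1,4),(a,3,4)], fst) ([(a,1::nat,3::nat),(a,1,4),(a,1,2),(a,2,3),(a,2,4),(a,20,0),(a,20,1),(a,1,2),(a,2,3),(a,20,1),(a,20,0),(a,1,3),(a,3,4),(a,2,4),(a,1,4),(a,3,4)], fst)"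
      by (rule m2[where x="[(a,1::nat,3::nat),(a,1,4)]" and A="(a,21,0)" and B="(a,21,1)" and y="[(a,1::nat,2::nat),(a,2,3),(a,2,4),(a,20,0),(a,20,1),(a,1,2),(a,2,3),(a,20,1)]" and z="[(a,20::nat,0::nat),(a,1,3),(a,3,4),(a,2,4),(a,1,4),(a,3,4)]"]) (simp_all add: is_nanoword_def ta)
    have s4: "nw_step \<tau> ([(a,1::nat,3::nat),(a,1,4),(a,21,0),(a,1,2),(a,21,1),(a,2,3),(a,2,4),(a,20,0),(a,1,2),(a,20,1),(a,2,3),(a,21,1),(a,20,1),(a,21,0),(a,20,0),(a,1,3),(a,3,4),(a,2,4),(a,1,4),(a,3,4)], fst) ([(a,1::nat,3::nat),(a,1,4),(a,21,0),(a,21,1),(a,1,2),(a,2,3),(a,2,4),(a,20,0),(a,20,1),(a,1,2),(a,2,3),(a,20,1),(a,21,1),(a,21,0),(a,20,0),(a,1,3),(a,3,4),(a,2,4),(a,1,4),(a,3,4)], fst)"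
      by (rule m3[where x="[(a,1::nat,3::nat),(a,1,4),(a,21,0)]" and A="(a,1,2)" and B="(a,21,1)" and y="[(a,2::nat,3::nat),(a,2,4),(a,20,0)]" and C="(a,20,1)" and z="[(a,2::nat,3::nat)]" and t="[(a,21::nat,0::nat),(a,20,0),(a,1,3),(a,3,4),(a,2,4),(a,1,4),(a,3,4)]"]) (simp_all add: is_nanoword_def ta)
    have s5: "nw_step \<tau> ([(a,1::nat,3::nat),(a,1,4),(a,21,0),(a,1,2),(a,21,1),(a,2,3),(a,2,4),(a,20,0),(a,1,2),(a,20,1),(a,2,3),(a,21,1),(a,20,1),(a,21,0),(a,20,0),(a,1,3),(a,3,4),(a,2,4),(a,1,4),(a,3,4)], fst) ([(a,1::nat,3::nat),(a,1,4),(a,21,0),(a,1,2),(a,2,4),(a,20,0),(a,1,2),(a,20,1),(a,20,1),(a,21,0),(a,20,0),(a,1,3),(a,3,4),(a,2,4),(a,1,4),(a,3,4)], fst)"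
      by (rule m2[where x="[(a,1::nat,3::nat),(a,1,4),(a,21,0),(a,1,2)]" and A="(a,21,1)" and B="(a,2,3)" and y="[(a,2::nat,4::nat),(a,20,0),(a,1,2),(a,20,1)]" and z="[(a,20::nat,1::nat),(a,21,0),(a,20,0),(a,1,3),(a,3,4),(a,2,4),(a,1,4),(a,3,4)]"]) (simp_all add: is_nanoword_def ta)
    have s6: "nw_step \<tau> ([(a,1::nat,3::nat),(a,1,4),(a,21,0),(a,1,2),(a,2,4),(a,20,0),(a,1,2),(a,20,1),(a,20,1),(a,21,0),(a,20,0),(a,1,3),(a,3,4),(a,2,4),(a,1,4),(a,3,4)], fst) ([(a,1::nat,3::nat),(a,1,4),(a,21,0),(a,1,2),(a,2,4),(a,20,0),(a,1,2),(a,21,0),(a,20,0),(a,1,3),(a,3,4),(a,2,4),(a,1,4),(a,3,4)], fst)"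
      by (rule m1[where x="[(a,1::nat,3::nat),(a,1,4),(a,21,0),(a,1,2),(a,2,4),(a,20,0),(a,1,2)]" and A="(a,20,1)" and y="[(a,21::nat,0::nat),(a,20,0),(a,1,3),(a,3,4),(a,2,4),(a,1,4),(a,3,4)]"]) (simp_all add: is_nanoword_def ta)
    have s7: "nw_step \<tau> ([(a,1::nat,3::nat),(a,1,4),(a,21,0),(a,1,2),(a,2,4),(a,20,0),(a,1,2),(a,21,0),(a,20,0),(a,1,3),(a,3,4),(a,2,4),(a,1,4),(a,3,4)], fst) ([(a,1::nat,3::nat),(a,1,4),(a,2,4),(a,20,0),(a,20,0),(a,1,3),(a,3,4),(a,2,4),(a,1,4),(a,3,4)], fst)"
      by (rule m2[where x="[(a,1::nat,3::nat),(a,1,4)]" and A="(a,21,0)" and B="(a,1,2)" and y="[(a,2::nat,4::nat),(a,20,0)]" and z="[(a,20::nat,0::nat),(a,1,3),(a,3,4),(a,2,4),(a,1,4),(a,3,4)]"]) (simp_all add: is_nanoword_def ta)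
    have s8: "nw_step \<tau> ([(a,1::nat,3::nat),(a,1,4),(a,2,4),(a,20,0),(a,20,0),(a,1,3),(a,3,4),(a,2,4),(a,1,4),(a,3,4)], fst) ([(a,1::nat,3::nat),(a,20,0),(a,20,0),(a,1,3),(a,3,4),(a,3,4)], fst)"
      by (rule m2[where x="[(a,1::nat,3::nat)]" and A="(a,1,4)" and B="(a,2,4)" and y="[(a,20::nat,0::nat),(a,20,0),(a,1,3),(a,3,4)]" and z="[(a,3::nat,4::nat)]"]) (simp_all add: is_nanoword_def ta)
    have s9: "nw_step \<tau> ([(a,1::nat,3::nat),(a,20,0),(a,20,0),(a,1,3),(a,3,4),(a,3,4)], fst) ([(a,1::nat,3::nat),(a,20,0),(a,20,0),(a,1,3)], fst)"
      by (rule m1[where x="[(a,1::nat,3::nat),(a,20,0),(a,20,0),(a,1,3)]" and A="(a,3,4)" and y="[]"]) (simp_all add: is_nanoword_def ta)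
    have s10: "nw_step \<tau> ([(a,1::nat,3::nat),(a,20,0),(a,20,0),(a,1,3)], fst) ([], fst)"
      by (rule m2[where x="[]" and A="(a,1,3)" and B="(a,20,0)" and y="[]" and z="[]"]) (simp_all add: is_nanoword_def ta)
    have h11: "nw_homotopic \<tau> ([], fst) ([], fst)" by (rule hom_refl)
    have h10: "nw_homotopic \<tau> ([(a,1::nat,3::nat),(a,20,0),(a,20,0),(a,1,3)], fst) ([], fst)" by (rule hom_fwd[OF s10 h11])
    have h9: "nw_homotopic \<tau> ([(a,1::nat,3::nat),(a,20,0),(a,20,0),(a,1,3),(a,3,4),(a,3,4)], fst) ([], fst)" by (rule hom_fwd[OF s9 h10])
    have h8: "nw_homotopic \<tau> ([(a,1::nat,3::nat),(a,1,4),(a,2,4),(a,20,0),(a,20,0),(a,1,3),(a,3,4),(a,2,4),(a,1,4),(a,3,4)], fst) ([], fst)" by (rule hom_fwd[OF s8 h9])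
    have h7: "nw_homotopic \<tau> ([(a,1::nat,3::nat),(a,1,4),(a,21,0),(a,1,2),(a,2,4),(a,20,0),(a,1,2),(a,21,0),(a,20,0),(a,1,3),(a,3,4),(a,2,4),(a,1,4),(a,3,4)], fst) ([], fst)" by (rule hom_fwd[OF s7 h8])
    have h6: "nw_homotopic \<tau> ([(a,1::nat,3::nat),(a,1,4),(a,21,0),(a,1,2),(a,2,4),(a,20,0),(a,1,2),(a,20,1),(a,20,1),(a,21,0),(a,20,0),(a,1,3),(a,3,4),(a,2,4),(a,1,4),(a,3,4)], fst) ([], fst)" by (rule hom_fwd[OF s6 h7])
    have h5: "nw_homotopic \<tau> ([(a,1::nat,3::nat),(a,1,4),(a,21,0),(a,1,2),(a,21,1),(a,2,3),(a,2,4),(a,20,0),(a,1,2),(a,20,1),(a,2,3),(a,21,1),(a,20,1),(a,21,0),(a,20,0),(a,1,3),(a,3,4),(a,2,4),(a,1,4),(a,3,4)], fst) ([], fst)" by (rule hom_fwd[OF s5 h6])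
    have h4: "nw_homotopic \<tau> ([(a,1::nat,3::nat),(a,1,4),(a,21,0),(a,21,1),(a,1,2),(a,2,3),(a,2,4),(a,20,0),(a,20,1),(a,1,2),(a,2,3),(a,20,1),(a,21,1),(a,21,0),(a,20,0),(a,1,3),(a,3,4),(a,2,4),(a,1,4),(a,3,4)], fst) ([], fst)" by (rule hom_bwd[OF s4 h5])
    have h3: "nw_homotopic \<tau> ([(a,1::nat,3::nat),(a,1,4),(a,1,2),(a,2,3),(a,2,4),(a,20,0),(a,20,1),(a,1,2),(a,2,3),(a,20,1),(a,20,0),(a,1,3),(a,3,4),(a,2,4),(a,1,4),(a,3,4)], fst) ([], fst)" by (rule hom_bwd[OF s3 h4])
    have h2: "nw_homotopic \<tau> ([(a,1::nat,3::nat),(a,1,4),(a,1,2),(a,2,3),(a,2,4),(a,1,2),(a,2,3),(a,1,3),(a,3,4),(a,2,4),(a,1,4),(a,3,4)], fst) ([], fst)" by (rule hom_bwd[OF s2 h3])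
    have h1: "nw_homotopic \<tau> ([(a,1::nat,3::nat),(a,1,2),(a,1,4),(a,2,3),(a,1,2),(a,2,4),(a,2,3),(a,1,3),(a,3,4),(a,1,4),(a,2,4),(a,3,4)], fst) ([], fst)" by (rule hom_fwd[OF s1 h2])
    have h0: "nw_homotopic \<tau> ([(a,1::nat,2::nat),(a,1,3),(a,1,4),(a,1,2),(a,2,3),(a,2,4),(a,1,3),(a,2,3),(a,3,4),(a,1,4),(a,2,4),(a,3,4)], fst) ([], fst)" by (rule hom_fwd[OF s0 h1])
    then show ?thesis .
  qed

  then show ?thesis unfolding contractible_def desing_aaaa .
qed

lemma len4_cases: "length w \<le> 4 \<Longrightarrow> w = [] \<or> (\<exists>x. w=[x]) \<or> (\<exists>x y. w=[x,y]) \<or> (\<exists>x y z. w=[x,y,z]) \<or> (\<exists>x y z u. w=[x,y,z,u])"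
proof -
  assume "length w \<le> 4"
  then have "length w = 0 \<or> length w = Suc 0 \<or> length w = Suc (Suc 0) \<or> length w = Suc (Suc (Suc 0)) \<or> length w = Suc (Suc (Suc (Suc 0)))" by linarith
  then show ?thesis by (elim disjE; auto simp: length_Suc_conv)
qed

lemma f4: assumes "mult_one_free [x,y,z,u::'a]"
  shows "(\<exists>a. [x,y,z,u] = [a, a, a, a]) \<or>
        (\<exists>a b. a \<noteq> b \<and> ([x,y,z,u] = [a, a, b, b] \<or> [x,y,z,u] = [a, b, b, a] \<or> [x,y,z,u] = [b, b, a, a] \<or> [x,y,z,u] = [a, b, a, b]))"
  using assms unfolding mult_one_free_def
  apply (cases "x=y"; cases "x=z"; cases "x=u"; cases "y=z"; cases "y=u"; cases "z=u")
  apply (simp_all)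
  apply (metis)+
  done

lemma forms: assumes "mult_one_free w" "length w \<le> 4"
  shows "w = [] \<or> (\<exists>a. w = [a, a] \<or> w = [a, a, a] \<or> w = [a, a, a, a]) \<or>
        (\<exists>a b. a \<noteq> b \<and> (w = [a, a, b, b] \<or> w = [a, b, b, a] \<or> w = [b, b, a, a] \<or> w = [a, b, a, b]))"
  using len4_cases[OF assms(2)]
proof (elim disjE exE)
  fix x assume "w = [x]" then show ?thesis using assms(1) by (simp add: mult_one_free_def)
next
  fix x y assume w: "w = [x,y]" then show ?thesis using assms(1)
    by (cases "x=y") (simp_all add: mult_one_free_def)
next
  fix x y z assume w: "w = [x,y,z]" then show ?thesis using assms(1) unfolding mult_one_free_def
    by (cases "x=y"; cases "x=z"; cases "y=z") simp_all
next
  fix x y z u assume w: "w = [x,y,z,u]" then show ?thesis using f4[of x y z u] assms(1) by blast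
qed simp

definition ea :: "('a \<Rightarrow> 'a) \<Rightarrow> 'a \<Rightarrow> 'a \<Rightarrow> int" where
  "ea \<tau> a x = (if x = a then 1 else if x = \<tau> a then -1 else 0)"

definition ind :: "('a \<Rightarrow> 'a) \<Rightarrow> 'a \<Rightarrow> 'a \<Rightarrow> bit" where
  "ind \<tau> a x = (if x = a \<or> x = \<tau> a then 1 else 0)"

lemma ea_tau: assumes inv: "\<forall>x. \<tau> (\<tau> x) = x" and na: "\<tau> a \<noteq> a"
  shows "\<forall>x. ea \<tau> a (\<tau> x) = - ea \<tau> a x"
proof
  fix x
  have e1: "\<tau> x = a \<longleftrightarrow> x = \<tau> a" using inv by metis
  have e2: "\<tau> x = \<tau> a \<longleftrightarrow> x = a" using inv by metis
  show "ea \<tau> a (\<tau> x) = - ea \<tau> a x"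
    unfolding ea_def using na e1 e2 by auto
qed

lemma ea_vals: "ea \<tau> a x = 1 \<or> ea \<tau> a x = 0 \<or> ea \<tau> a x = -1"
  by (simp add: ea_def)

lemma ea_one: "ea \<tau> a x = 1 \<longleftrightarrow> x = a"
  by (simp add: ea_def)

lemma bit_neg: "- (y::bit) = y" by simp

lemma ind_tau: assumes inv: "\<forall>x. \<tau> (\<tau> x) = x"
  shows "\<forall>x. ind \<tau> a (\<tau> x) = - ind \<tau> a x"
proof
  fix x
  have e1: "\<tau> x = a \<longleftrightarrow> x = \<tau> a" using inv by metis
  have e2: "\<tau> x = \<tau> a \<longleftrightarrow> x = a" using inv by metis
  show "ind \<tau> a (\<tau> x) = - ind \<tau> a x"
    unfolding ind_def bit_neg using e1 e2 by auto
qed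

lemma II_nil: "II \<phi> \<psi> ([], p) = 0" by (simp add: II_def)
lemma JJ_nil: "JJ u v ([], p) = 0" by (simp add: JJ_def)

lemma contr_II: "contractible \<tau> w \<Longrightarrow> (\<forall>x. \<phi> (\<tau> x) = - \<phi> x) \<Longrightarrow> (\<forall>x l. \<psi> (\<tau> x) l = - \<psi> x l)
  \<Longrightarrow> (\<forall>x. \<psi> x 0 = 0) \<Longrightarrow> II \<phi> \<psi> (desing w, fst) = 0"
  unfolding contractible_def using II_nil by (metis (no_types) hom_inv)

lemma contr_JJ: "contractible \<tau> w \<Longrightarrow> (\<forall>x. u (\<tau> x) = - u x) \<Longrightarrow> (\<forall>x. v (\<tau> x) = - v x)
  \<Longrightarrow> (\<forall>x. u x * v x = 0) \<Longrightarrow> JJ u v (desing w, fst) = 0"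
  unfolding contractible_def using JJ_nil by (metis (no_types) hom_invJ)

lemma wh_II: "word_homotopic \<tau> w w' \<Longrightarrow> (\<forall>x. \<phi> (\<tau> x) = - \<phi> x) \<Longrightarrow> (\<forall>x l. \<psi> (\<tau> x) l = - \<psi> x l)
  \<Longrightarrow> (\<forall>x. \<psi> x 0 = 0) \<Longrightarrow> II \<phi> \<psi> (desing w, fst) = II \<phi> \<psi> (desing w', fst)"
  unfolding word_homotopic_def by (rule hom_inv)

lemma wh_JJ: "word_homotopic \<tau> w w' \<Longrightarrow> (\<forall>x. u (\<tau> x) = - u x) \<Longrightarrow> (\<forall>x. v (\<tau> x) = - v x)
  \<Longrightarrow> (\<forall>x. u x * v x = 0) \<Longrightarrow> JJ u v (desing w, fst) = JJ u v (desing w', fst)"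
  unfolding word_homotopic_def by (rule hom_invJ)

lemma rtranclp_symclp_sym: "(symclp R)\<^sup>*\<^sup>* x y \<Longrightarrow> (symclp R)\<^sup>*\<^sup>* y x"
proof (induction rule: rtranclp_induct)
  case base then show ?case by simp
next
  case (step y z)
  have "symclp R z y" using step(2) by (auto simp: symclp_def)
  then show ?case using step(3) by (rule converse_rtranclp_into_rtranclp)
qed

lemma wh_sym: "word_homotopic \<tau> w w' \<Longrightarrow> word_homotopic \<tau> w' w"
  unfolding word_homotopic_def nw_homotopic_def by (rule rtranclp_symclp_sym)

lemma wh_refl: "word_homotopic \<tau> w w"
  unfolding word_homotopic_def by (rule hom_refl)

lemma aaa_vs: assumes inv: "\<forall>x. \<tau> (\<tau> x) = x" and na: "\<tau> a \<noteq> a"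
  shows "II (ea \<tau> a) (\<lambda>x l. ea \<tau> a x * l^2) (desing [b,b,b], fst) = 2 * ea \<tau> a b"
    and "II (ea \<tau> a) (\<lambda>x l. ea \<tau> a x * l^2) (desing [b,b,b,b], fst) = 16 * ea \<tau> a b"
    and "c \<noteq> d \<Longrightarrow> II (ea \<tau> a) (\<lambda>x l. ea \<tau> a x * l^2) (desing [c,d,c,d], fst) \<in> {-2,-1,0,1}"
proof -
  show "II (ea \<tau> a) (\<lambda>x l. ea \<tau> a x * l^2) (desing [b,b,b], fst) = 2 * ea \<tau> a b"
    unfolding II_aaa using ea_vals[of \<tau> a b] by (auto simp: power2_eq_square)
  show "II (ea \<tau> a) (\<lambda>x l. ea \<tau> a x * l^2) (desing [b,b,b,b], fst) = 16 * ea \<tau> a b"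
    unfolding II_aaaa using ea_vals[of \<tau> a b] by (auto simp: power2_eq_square)
  assume cd: "c \<noteq> d"
  show "II (ea \<tau> a) (\<lambda>x l. ea \<tau> a x * l^2) (desing [c,d,c,d], fst) \<in> {-2,-1,0,1}"
    unfolding II_abab[OF cd] using ea_vals[of \<tau> a c] ea_vals[of \<tau> a d] ea_one[of \<tau> a c] ea_one[of \<tau> a d] cd
    by (auto simp: power2_eq_square)
qed

lemma psi_a: assumes "\<forall>x. \<tau> (\<tau> x) = x" "\<tau> a \<noteq> a"
  shows "\<forall>x l. ea \<tau> a (\<tau> x) * l^2 = - (ea \<tau> a x * l^2)" "\<forall>x. ea \<tau> a x * 0^2 = 0"
  using ea_tau[OF assms] by auto

lemma aaa_unique: assumes inv: "\<forall>x. \<tau> (\<tau> x) = x" and na: "\<tau> a \<noteq> a"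
  and h: "word_homotopic \<tau> [a,a,a] v"
  and v: "(\<exists>b. v = [b, b, b] \<or> v = [b, b, b, b]) \<or> (\<exists>c d. c \<noteq> d \<and> v = [c, d, c, d])"
  shows "v = [a,a,a]"
proof -
  have E: "II (ea \<tau> a) (\<lambda>x l. ea \<tau> a x * l^2) (desing [a,a,a], fst) = II (ea \<tau> a) (\<lambda>x l. ea \<tau> a x * l^2) (desing v, fst)"
    by (rule wh_II[OF h ea_tau[OF inv na] psi_a[OF inv na]])
  have A: "II (ea \<tau> a) (\<lambda>x l. ea \<tau> a x * l^2) (desing [a,a,a], fst) = 2"
    using aaa_vs(1)[OF inv na, of a] by (simp add: ea_def)
  from v show ?thesis
  proof (elim disjE exE conjE)
    fix b assume "v = [b,b,b]" then show ?thesis using E A aaa_vs(1)[OF inv na, of b] ea_one[of \<tau> a b] by auto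
  next
    fix b assume "v = [b,b,b,b]"
    then have "16 * ea \<tau> a b = 2" using E A aaa_vs(2)[OF inv na, of b] by simp
    then show ?thesis by presburger
  next
    fix c d assume "c \<noteq> d" "v = [c,d,c,d]" then show ?thesis using E A aaa_vs(3)[OF inv na, of c d] by auto
  qed
qed

lemma aaaa_unique: assumes inv: "\<forall>x. \<tau> (\<tau> x) = x" and na: "\<tau> a \<noteq> a"
  and h: "word_homotopic \<tau> [a,a,a,a] v"
  and v: "(\<exists>b. v = [b, b, b] \<or> v = [b, b, b, b]) \<or> (\<exists>c d. c \<noteq> d \<and> v = [c, d, c, d])"
  shows "v = [a,a,a,a]"
proof -
  have E: "II (ea \<tau> a) (\<lambda>x l. ea \<tau> a x * l^2) (desing [a,a,a,a], fst) = II (ea \<tau> a) (\<lambda>x l. ea \<tau> a x * l^2) (desing v, fst)"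
    by (rule wh_II[OF h ea_tau[OF inv na] psi_a[OF inv na]])
  have A: "II (ea \<tau> a) (\<lambda>x l. ea \<tau> a x * l^2) (desing [a,a,a,a], fst) = 16"
    using aaa_vs(2)[OF inv na, of a] by (simp add: ea_def)
  from v show ?thesis
  proof (elim disjE exE conjE)
    fix b assume "v = [b,b,b]"
    then have "2 * ea \<tau> a b = 16" using E A aaa_vs(1)[OF inv na, of b] by simp
    then show ?thesis using ea_vals[of \<tau> a b] by auto
  next
    fix b assume "v = [b,b,b,b]" then show ?thesis using E A aaa_vs(2)[OF inv na, of b] ea_one[of \<tau> a b] by auto
  next
    fix c d assume "c \<noteq> d" "v = [c,d,c,d]" then show ?thesis using E A aaa_vs(3)[OF inv na, of c d] by auto
  qed
qed


lemma abab_unique: assumes inv: "\<forall>x. \<tau> (\<tau> x) = x" and ab: "a \<noteq> b" and tab: "\<tau> a \<noteq> b"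
  and cd: "c \<noteq> d" and h: "word_homotopic \<tau> [a,b,a,b] [c,d,c,d]"
  shows "c = a \<and> d = b"
proof -
  have atb: "a \<noteq> \<tau> b" using tab inv by metis
  have tatb: "\<tau> a \<noteq> \<tau> b" using ab inv by metis
  have uv: "\<forall>x. ind \<tau> a x * ind \<tau> b x = 0"
    unfolding ind_def using ab tab atb tatb by auto
  have J: "JJ (ind \<tau> a) (ind \<tau> b) (desing [a,b,a,b], fst) = JJ (ind \<tau> a) (ind \<tau> b) (desing [c,d,c,d], fst)"
    by (rule wh_JJ[OF h ind_tau[OF inv] ind_tau[OF inv] uv])
  then have "ind \<tau> a c * ind \<tau> b d = 1" unfolding JJ_abab[OF ab] JJ_abab[OF cd] by (simp add: ind_def)
  then have c: "c = a \<or> c = \<tau> a" and d: "d = b \<or> d = \<tau> b"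
    unfolding ind_def by (auto split: if_splits)
  show ?thesis
  proof (rule ccontr)
    assume neq: "\<not> (c = a \<and> d = b)"
    show False
    proof (cases "d = b")
      case True
      then have cta: "c = \<tau> a" "c \<noteq> a" using neq c by auto
      then have na: "\<tau> a \<noteq> a" by simp
      define \<psi> where "\<psi> = (\<lambda>x (l::int). if (x = b \<or> x = \<tau> b) \<and> l = -1 then (1::bit) else 0)"
      have ps: "\<forall>x l. \<psi> (\<tau> x) l = - \<psi> x l"
      proof (intro allI)
        fix x l
        have e1: "\<tau> x = b \<longleftrightarrow> x = \<tau> b" using inv by metis
        have e2: "\<tau> x = \<tau> b \<longleftrightarrow> x = b" using inv by metis
        show "\<psi> (\<tau> x) l = - \<psi> x l" unfolding \<psi>_def bit_neg using e1 e2 by auto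
      qed
      have ps0: "\<forall>x. \<psi> x 0 = 0" by (simp add: \<psi>_def)
      have E: "II (ea \<tau> a) \<psi> (desing [a,b,a,b], fst) = II (ea \<tau> a) \<psi> (desing [c,d,c,d], fst)"
        by (rule wh_II[OF h ea_tau[OF inv na] ps ps0])
      have "II (ea \<tau> a) \<psi> (desing [a,b,a,b], fst) = 1"
        unfolding II_abab[OF ab] using ab tab atb na by (simp add: \<psi>_def ea_def)
      moreover have "II (ea \<tau> a) \<psi> (desing [c,d,c,d], fst) = 0"
        unfolding II_abab[OF cd] using ab tab atb na cta True by (simp add: \<psi>_def ea_def)
      ultimately show False using E by simp
    next
      case False
      then have dtb: "d = \<tau> b" "d \<noteq> b" using d by auto
      then have nb: "\<tau> b \<noteq> b" by simp
      define \<psi> where "\<psi> = (\<lambda>x (l::int). if (x = a \<or> x = \<tau> a) \<and> l = 1 then (1::bit) else 0)"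
      have ps: "\<forall>x l. \<psi> (\<tau> x) l = - \<psi> x l"
      proof (intro allI)
        fix x l
        have e1: "\<tau> x = a \<longleftrightarrow> x = \<tau> a" using inv by metis
        have e2: "\<tau> x = \<tau> a \<longleftrightarrow> x = a" using inv by metis
        show "\<psi> (\<tau> x) l = - \<psi> x l" unfolding \<psi>_def bit_neg using e1 e2 by auto
      qed
      have ps0: "\<forall>x. \<psi> x 0 = 0" by (simp add: \<psi>_def)
      have E: "II (ea \<tau> b) \<psi> (desing [a,b,a,b], fst) = II (ea \<tau> b) \<psi> (desing [c,d,c,d], fst)"
        by (rule wh_II[OF h ea_tau[OF inv nb] ps ps0])
      have "II (ea \<tau> b) \<psi> (desing [a,b,a,b], fst) = 1"
        unfolding II_abab[OF ab] using ab tab atb nb by (simp add: \<psi>_def ea_def)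
      moreover have "II (ea \<tau> b) \<psi> (desing [c,d,c,d], fst) = 0"
        unfolding II_abab[OF cd] using ab tab atb tatb nb dtb by (simp add: \<psi>_def ea_def)
      ultimately show False using E by simp
    qed
  qed
qed

lemma desing_aa: "desing [a,a] = [(a,1,2),(a,1,2)]"
  by (simp add: desing_def upt_rec)
lemma desing_aabb: "a \<noteq> b \<Longrightarrow> desing [a,a,b,b] = [(a,1,2),(a,1,2),(b,1,2),(b,1,2)]"
  by (simp add: desing_def upt_rec)
lemma desing_abba: "a \<noteq> b \<Longrightarrow> desing [a,b,b,a] = [(a,1,2),(b,1,2),(b,1,2),(a,1,2)]"
  by (simp add: desing_def upt_rec)

lemma contr_aa: "contractible \<tau> [a,a]"
proof -
  have s: "nw_step \<tau> ([(a,1::nat,2::nat),(a,1,2)], fst) ([], fst)"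
    by (rule m1[where x="[]" and A="(a,1,2)" and y="[]"]) (simp_all add: is_nanoword_def)
  show ?thesis unfolding contractible_def desing_aa by (rule hom_fwd[OF s hom_refl])
qed

lemma contr_aabb: assumes ab: "a \<noteq> b" shows "contractible \<tau> [a,a,b,b]"
proof -
  have s1: "nw_step \<tau> ([(a,1::nat,2::nat),(a,1,2),(b,1,2),(b,1,2)], fst) ([(b,1::nat,2::nat),(b,1,2)], fst)"
    by (rule m1[where x="[]" and A="(a,1,2)" and y="[(b,1,2),(b,1,2)]"]) (use ab in \<open>simp_all add: is_nanoword_def\<close>)
  have s2: "nw_step \<tau> ([(b,1::nat,2::nat),(b,1,2)], fst) ([], fst)"
    by (rule m1[where x="[]" and A="(b,1,2)" and y="[]"]) (simp_all add: is_nanoword_def)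
  show ?thesis unfolding contractible_def desing_aabb[OF ab] by (rule hom_fwd[OF s1 hom_fwd[OF s2 hom_refl]])
qed

lemma contr_abba: assumes ab: "a \<noteq> b" shows "contractible \<tau> [a,b,b,a]"
proof -
  have s1: "nw_step \<tau> ([(a,1::nat,2::nat),(b,1,2),(b,1,2),(a,1,2)], fst) ([(a,1::nat,2::nat),(a,1,2)], fst)"
    by (rule m1[where x="[(a,1,2)]" and A="(b,1,2)" and y="[(a,1,2)]"]) (use ab in \<open>simp_all add: is_nanoword_def\<close>)
  have s2: "nw_step \<tau> ([(a,1::nat,2::nat),(a,1,2)], fst) ([], fst)"
    by (rule m1[where x="[]" and A="(a,1,2)" and y="[]"]) (simp_all add: is_nanoword_def)
  show ?thesis unfolding contractible_def desing_abba[OF ab] by (rule hom_fwd[OF s1 hom_fwd[OF s2 hom_refl]])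
qed

lemma aaa_iff: assumes inv: "\<forall>x. \<tau> (\<tau> x) = x" shows "contractible \<tau> [a,a,a] \<longleftrightarrow> \<tau> a = a"
proof
  assume c: "contractible \<tau> [a,a,a]"
  show "\<tau> a = a"
  proof (rule ccontr)
    assume na: "\<tau> a \<noteq> a"
    have "II (ea \<tau> a) (\<lambda>x l. ea \<tau> a x * l^2) (desing [a,a,a], fst) = 0"
      by (rule contr_II[OF c ea_tau[OF inv na] psi_a[OF inv na]])
    then show False using aaa_vs(1)[OF inv na, of a] by (simp add: ea_def)
  qed
qed (rule contr_aaa)

lemma aaaa_iff: assumes inv: "\<forall>x. \<tau> (\<tau> x) = x" shows "contractible \<tau> [a,a,a,a] \<longleftrightarrow> \<tau> a = a"
proof
  assume c: "contractible \<tau> [a,a,a,a]"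
  show "\<tau> a = a"
  proof (rule ccontr)
    assume na: "\<tau> a \<noteq> a"
    have "II (ea \<tau> a) (\<lambda>x l. ea \<tau> a x * l^2) (desing [a,a,a,a], fst) = 0"
      by (rule contr_II[OF c ea_tau[OF inv na] psi_a[OF inv na]])
    then show False using aaa_vs(2)[OF inv na, of a] by (simp add: ea_def)
  qed
qed (rule contr_aaaa)

lemma abab_iff: assumes inv: "\<forall>x. \<tau> (\<tau> x) = x" and ab: "a \<noteq> b"
  shows "contractible \<tau> [a,b,a,b] \<longleftrightarrow> \<tau> a = b"
proof
  assume c: "contractible \<tau> [a,b,a,b]"
  show "\<tau> a = b"
  proof (rule ccontr)
    assume tab: "\<tau> a \<noteq> b"
    have atb: "a \<noteq> \<tau> b" using tab inv by metis
    have tatb: "\<tau> a \<noteq> \<tau> b" using ab inv by metis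
    have uv: "\<forall>x. ind \<tau> a x * ind \<tau> b x = 0"
      unfolding ind_def using ab tab atb tatb by auto
    have "JJ (ind \<tau> a) (ind \<tau> b) (desing [a,b,a,b], fst) = 0"
      by (rule contr_JJ[OF c ind_tau[OF inv] ind_tau[OF inv] uv])
    then show False unfolding JJ_abab[OF ab] by (simp add: ind_def)
  qed
next
  assume "\<tau> a = b"
  moreover then have "\<tau> b = a" using inv by metis
  ultimately show "contractible \<tau> [a,b,a,b]" using contr_abab ab by metis
qed

theorem theorem9p1:
  fixes \<tau> :: "'a \<Rightarrow> 'a"
  assumes inv: "\<forall>x. \<tau> (\<tau> x) = x"
  shows
    "(\<forall>w :: 'a list. mult_one_free w \<and> length w \<le> 4 \<longrightarrow>
        w = [] \<or> (\<exists>a. w = [a, a] \<or> w = [a, a, a] \<or> w = [a, a, a, a]) \<or>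
        (\<exists>a b. a \<noteq> b \<and> (w = [a, a, b, b] \<or> w = [a, b, b, a] \<or> w = [b, b, a, a] \<or> w = [a, b, a, b])))
   \<and> (\<forall>a. contractible \<tau> [a, a])
   \<and> (\<forall>a b. a \<noteq> b \<longrightarrow> contractible \<tau> [a, a, b, b] \<and> contractible \<tau> [a, b, b, a]
                        \<and> contractible \<tau> [b, b, a, a])
   \<and> (\<forall>a. contractible \<tau> [a, a, a] \<longleftrightarrow> \<tau> a = a)
   \<and> (\<forall>a. contractible \<tau> [a, a, a, a] \<longleftrightarrow> \<tau> a = a)
   \<and> (\<forall>a b. a \<noteq> b \<longrightarrow> (contractible \<tau> [a, b, a, b] \<longleftrightarrow> \<tau> a = b))
   \<and> (\<forall>u v. u \<in> {w. (\<exists>a. w = [a, a, a] \<or> w = [a, a, a, a]) \<or> (\<exists>a b. a \<noteq> b \<and> w = [a, b, a, b])}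
          \<longrightarrow> v \<in> {w. (\<exists>a. w = [a, a, a] \<or> w = [a, a, a, a]) \<or> (\<exists>a b. a \<noteq> b \<and> w = [a, b, a, b])}
          \<longrightarrow> \<not> contractible \<tau> u \<longrightarrow> \<not> contractible \<tau> v
          \<longrightarrow> (word_homotopic \<tau> u v \<longleftrightarrow> u = v))"
proof (intro conjI allI impI)
  fix w :: "'a list"
  assume "mult_one_free w \<and> length w \<le> 4"
  then show "w = [] \<or> (\<exists>a. w = [a, a] \<or> w = [a, a, a] \<or> w = [a, a, a, a]) \<or>
        (\<exists>a b. a \<noteq> b \<and> (w = [a, a, b, b] \<or> w = [a, b, b, a] \<or> w = [b, b, a, a] \<or> w = [a, b, a, b]))"
    using forms by blast
next
  fix a :: 'a show "contractible \<tau> [a, a]" by (rule contr_aa)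
next
  fix a b :: 'a assume "a \<noteq> b"
  then show "contractible \<tau> [a, a, b, b]" by (rule contr_aabb)
next
  fix a b :: 'a assume "a \<noteq> b"
  then show "contractible \<tau> [a, b, b, a]" by (rule contr_abba)
next
  fix a b :: 'a assume "a \<noteq> b"
  then show "contractible \<tau> [b, b, a, a]" by (intro contr_aabb) simp
next
  fix a :: 'a show "contractible \<tau> [a, a, a] \<longleftrightarrow> \<tau> a = a" by (rule aaa_iff[OF inv])
next
  fix a :: 'a show "contractible \<tau> [a, a, a, a] \<longleftrightarrow> \<tau> a = a" by (rule aaaa_iff[OF inv])
next
  fix a b :: 'a assume "a \<noteq> b"
  then show "contractible \<tau> [a, b, a, b] \<longleftrightarrow> \<tau> a = b" by (rule abab_iff[OF inv])
next
  fix u v :: "'a list"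
  assume uS: "u \<in> {w. (\<exists>a. w = [a, a, a] \<or> w = [a, a, a, a]) \<or> (\<exists>a b. a \<noteq> b \<and> w = [a, b, a, b])}"
    and vS: "v \<in> {w. (\<exists>a. w = [a, a, a] \<or> w = [a, a, a, a]) \<or> (\<exists>a b. a \<noteq> b \<and> w = [a, b, a, b])}"
    and nu: "\<not> contractible \<tau> u" and nv: "\<not> contractible \<tau> v"
  have vS': "(\<exists>b. v = [b, b, b] \<or> v = [b, b, b, b]) \<or> (\<exists>c d. c \<noteq> d \<and> v = [c, d, c, d])"
    using vS by simp
  have uS': "(\<exists>b. u = [b, b, b] \<or> u = [b, b, b, b]) \<or> (\<exists>c d. c \<noteq> d \<and> u = [c, d, c, d])"
    using uS by simp
  show "word_homotopic \<tau> u v \<longleftrightarrow> u = v"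
  proof
    assume h: "word_homotopic \<tau> u v"
    from uS' show "u = v"
    proof (elim disjE exE conjE)
      fix a assume u: "u = [a,a,a]"
      then have "\<tau> a \<noteq> a" using nu contr_aaa by metis
      then show ?thesis using aaa_unique[OF inv _ _ vS'] h u by metis
    next
      fix a assume u: "u = [a,a,a,a]"
      then have "\<tau> a \<noteq> a" using nu contr_aaaa by metis
      then show ?thesis using aaaa_unique[OF inv _ _ vS'] h u by metis
    next
      fix a b assume ab: "a \<noteq> b" and u: "u = [a,b,a,b]"
      then have tab: "\<tau> a \<noteq> b" using nu abab_iff[OF inv ab] by metis
      have h': "word_homotopic \<tau> v u" by (rule wh_sym[OF h])
      from vS' show ?thesis
      proof (elim disjE exE conjE)
        fix c assume v: "v = [c,c,c]"
        then have "\<tau> c \<noteq> c" using nv contr_aaa by metis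
        then have "u = [c,c,c]" using aaa_unique[OF inv _ _ uS'] h' v by metis
        then show ?thesis using u by simp
      next
        fix c assume v: "v = [c,c,c,c]"
        then have "\<tau> c \<noteq> c" using nv contr_aaaa by metis
        then have "u = [c,c,c,c]" using aaaa_unique[OF inv _ _ uS'] h' v by metis
        then show ?thesis using u ab by simp
      next
        fix c d assume cd: "c \<noteq> d" and v: "v = [c,d,c,d]"
        then show ?thesis using abab_unique[OF inv ab tab cd] h u by metis
      qed
    qed
  next
    assume "u = v" then show "word_homotopic \<tau> u v" by (simp add: wh_refl)
  qed
qed

end
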